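(* For all $\sigma\in\Sigma_k$, $\tau\in\Sigma_l$ and $\epsilon\in Sh(k,l)$, the element $\epsilon^{-1}.(\mathbb T^\sigma\mathbb T^\tau)$ lies in $\mathbf H_{ho}$ and $$\epsilon^{-1}.(\mathbb T^\sigma\,\mathbb T^\tau)=\sum_{\zeta\in Sh(k,l)}\mathbb T^{\zeta^{-1}\circ(\sigma\otimes\tau)\circ\epsilon}.$$
   Context: A rooted forest is a finite graph each of whose components is a tree with a distinguished root; edges are oriented towards the roots, and $v\twoheadrightarrow w$ means there is an oriented path from $v$ to $w\ne v$. An ordered forest with $n$ vertices is a rooted forest with a total order on the vertices, identifying them with $\{1,\dots,n\}$; it is heap-ordered if $i\twoheadrightarrow j\Rightarrow i>j$. $\mathbf H_o$ (resp. $\mathbf H_{ho}$) is the vector space with basis ordered (resp. heap-ordered) forests, with product $\mathbb F\mathbb G$ = disjoint union where the vertices of $\mathbb G$ are shifted by the number of vertices of $\mathbb F$, and coproduct by admissible cuts $\Delta(\mathbb F)=\sum_{\vec v}\mathrm{Roo}_{\vec v}\mathbb F\otimes\mathrm{Lea}_{\vec v}\mathbb F$ ($\vec v$ a possibly empty set of pairwise $\twoheadrightarrow$-incomparable vertices; $\mathrm{Lea}_{\vec v}\mathbb F$ the subforest on $\vec v$ and all $w$ with $w\twoheadrightarrow v$ for some $v\in\vec v$; $\mathrm{Roo}_{\vec v}\mathbb F$ the subforest on the rest; orders restricted). For $\pi\in\Sigma_n$, $\pi.\mathbb F$ is the ordered forest with the same underlying rooted forest in which vertex $i$ is relabeled $\pi(i)$,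 extended linearly to the degree-$n$ part of $\mathbf H_o$. $(\sigma\circ\tau)(i)=\sigma(\tau(i))$; $(\sigma\otimes\tau)(i)=\sigma(i)$ for $i\le k$, $k+\tau(i-k)$ for $i>k$; $Sh(k,l)=\{\zeta\in\Sigma_{k+l}:\zeta^{-1}(1)<\dots<\zeta^{-1}(k),\ \zeta^{-1}(k+1)<\dots<\zeta^{-1}(k+l)\}$. $\mathbf{FQSym}$ has basis $\bigsqcup_n\Sigma_n$, product $\sigma\cdot\tau=\sum_{\epsilon\in Sh(k,l)}(\sigma\otimes\tau)\circ\epsilon$, coproduct $\Delta(\sigma)=\sum_k\sigma_1^{(k)}\otimes\sigma_2^{(k)}$ (standardizations of prefix and suffix of the word of $\sigma$). $S_{\mathbb F}=\{\sigma\in\Sigma_n:i\twoheadrightarrow j\Rightarrow\sigma^{-1}(i)>\sigma^{-1}(j)\}$, $\Theta(\mathbb F)=\sum_{\sigma\in S_{\mathbb F}}\sigma$; the restriction of $\Theta$ to $\mathbf H_{ho}$ is a Hopf algebra isomorphism onto $\mathbf{FQSym}$. For $\sigma\in\Sigma_n$, $\mathbb T^\sigma$ is the unique element of $\mathbf H_{ho}$ with $\Theta(\mathbb T^\sigma)=\sigma^{-1}$. *)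

theory Defs
  imports "HOL-Library.Poly_Mapping" "HOL-Combinatorics.Permutations"
begin

text \<open>An ordered forest with n vertices: vertices are 1..n, given by the pair
  (n, parent function). The parent function is None on roots and outside 1..n.
  Edges are oriented towards the roots.\<close>
type_synonym oforest = "nat \<times> (nat \<Rightarrow> nat option)"

definition fedges :: "oforest \<Rightarrow> (nat \<times> nat) set" where
  "fedges F = {(i, j). snd F i = Some j}"

definition reach :: "oforest \<Rightarrow> nat \<Rightarrow> nat \<Rightarrow> bool" where
  "reach F v w \<longleftrightarrow> (v, w) \<in> (fedges F)\<^sup>+ \<and> v \<noteq> w"

definition ordered_forest :: "oforest \<Rightarrow> bool" where
  "ordered_forest F \<longleftrightarrow>
     (\<forall>i j. snd F i = Some j \<longrightarrow> i \<in> {1..fst F} \<and> j \<in> {1..fst F}) \<and>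
     (\<forall>i. (i, i) \<notin> (fedges F)\<^sup>+)"

definition heap_ordered :: "oforest \<Rightarrow> bool" where
  "heap_ordered F \<longleftrightarrow> ordered_forest F \<and> (\<forall>i j. reach F i j \<longrightarrow> i > j)"

definition H_o :: "(oforest \<Rightarrow>\<^sub>0 'k::field) set" where
  "H_o = {x. \<forall>F \<in> Poly_Mapping.keys x. ordered_forest F}"

definition H_ho :: "(oforest \<Rightarrow>\<^sub>0 'k::field) set" where
  "H_ho = {x. \<forall>F \<in> Poly_Mapping.keys x. heap_ordered F}"

definition fmul :: "oforest \<Rightarrow> oforest \<Rightarrow> oforest" where
  "fmul F G = (fst F + fst G,
     \<lambda>i. if i \<le> fst F then snd F i else map_option (\<lambda>j. j + fst F) (snd G (i - fst F)))"

definition vmul :: "(oforest \<Rightarrow>\<^sub>0 'k::field) \<Rightarrow> (oforest \<Rightarrow>\<^sub>0 'k) \<Rightarrow> (oforest \<Rightarrow>\<^sub>0 'k)" where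
  "vmul x y = (\<Sum>F\<in>Poly_Mapping.keys x. \<Sum>G\<in>Poly_Mapping.keys y. Poly_Mapping.single (fmul F G) (Poly_Mapping.lookup x F * Poly_Mapping.lookup y G))"

text \<open>Action of a permutation pi (of {1..n}) on an ordered forest: vertex i is relabeled pi(i).\<close>
definition fact :: "(nat \<Rightarrow> nat) \<Rightarrow> oforest \<Rightarrow> oforest" where
  "fact pi F = (fst F, \<lambda>j. map_option pi (snd F (inv pi j)))"

definition vact :: "(nat \<Rightarrow> nat) \<Rightarrow> (oforest \<Rightarrow>\<^sub>0 'k::field) \<Rightarrow> (oforest \<Rightarrow>\<^sub>0 'k)" where
  "vact pi x = (\<Sum>F\<in>Poly_Mapping.keys x. Poly_Mapping.single (fact pi F) (Poly_Mapping.lookup x F))"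

text \<open>FQSym: basis the disjoint union of the Sigma_n, a permutation of {1..n} encoded as (n, sigma).\<close>
type_synonym fqsym_basis = "nat \<times> (nat \<Rightarrow> nat)"

definition Sym :: "nat \<Rightarrow> (nat \<Rightarrow> nat) set" where
  "Sym n = {s. s permutes {1..n}}"

definition S_F :: "oforest \<Rightarrow> (nat \<Rightarrow> nat) set" where
  "S_F F = {s. s \<in> Sym (fst F) \<and> (\<forall>i j. reach F i j \<longrightarrow> inv s i > inv s j)}"

definition Theta :: "(oforest \<Rightarrow>\<^sub>0 'k::field) \<Rightarrow> (fqsym_basis \<Rightarrow>\<^sub>0 'k)" where
  "Theta x = (\<Sum>F\<in>Poly_Mapping.keys x. \<Sum>s\<in>S_F F. Poly_Mapping.single (fst F, s) (Poly_Mapping.lookup x F))"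

definition Tsig :: "nat \<Rightarrow> (nat \<Rightarrow> nat) \<Rightarrow> (oforest \<Rightarrow>\<^sub>0 'k::field)" where
  "Tsig n s = (THE x. x \<in> H_ho \<and> Theta x = Poly_Mapping.single (n, inv s) 1)"

definition ptensor :: "nat \<Rightarrow> (nat \<Rightarrow> nat) \<Rightarrow> (nat \<Rightarrow> nat) \<Rightarrow> nat \<Rightarrow> nat" where
  "ptensor k s t i = (if i \<le> k then s i else k + t (i - k))"

definition Sh :: "nat \<Rightarrow> nat \<Rightarrow> (nat \<Rightarrow> nat) set" where
  "Sh k l = {z. z \<in> Sym (k + l) \<and>
     (\<forall>i j. 1 \<le> i \<and> i < j \<and> j \<le> k \<longrightarrow> inv z i < inv z j) \<and>
     (\<forall>i j. k + 1 \<le> i \<and> i < j \<and> j \<le> k + l \<longrightarrow> inv z i < inv z j)}"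

end

theory Submission
  imports Defs
begin


definition HO :: "nat \<Rightarrow> oforest set" where
  "HO n = {F. fst F = n \<and> (\<forall>i j. snd F i = Some j \<longrightarrow> 1 \<le> j \<and> j < i \<and> i \<le> n)}"

lemma trancl_dec:
  assumes "\<And>i j. snd F i = Some j \<Longrightarrow> j < i"
  shows "(a, b) \<in> (fedges F)\<^sup>+ \<Longrightarrow> b < a"
proof (induction rule: trancl_induct)
  case (base y) then show ?case using assms by (auto simp: fedges_def)
next
  case (step y z) then show ?case using assms by (fastforce simp: fedges_def)
qed

lemma ho_char: "heap_ordered F \<longleftrightarrow> F \<in> HO (fst F)"
proof
  assume h: "heap_ordered F"
  show "F \<in> HO (fst F)" unfolding HO_def
  proof (safe)
    fix i j assume e: "snd F i = Some j"
    then have r: "(i, j) \<in> (fedges F)\<^sup>+" by (auto simp: fedges_def)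
    have "i \<noteq> j" using h r unfolding heap_ordered_def ordered_forest_def by auto
    then have "reach F i j" using r by (simp add: reach_def)
    then show "j < i" using h by (auto simp: heap_ordered_def)
    show "1 \<le> j" "i \<le> fst F" using h e by (auto simp: heap_ordered_def ordered_forest_def)
  qed
next
  assume h: "F \<in> HO (fst F)"
  have d: "\<And>i j. snd F i = Some j \<Longrightarrow> j < i" using h by (auto simp: HO_def)
  have o: "\<forall>i j. snd F i = Some j \<longrightarrow> i \<in> {1..fst F} \<and> j \<in> {1..fst F}"
  proof (intro allI impI)
    fix i j assume e: "snd F i = Some j"
    then have "1 \<le> j \<and> j < i \<and> i \<le> fst F" using h unfolding HO_def by blast
    then show "i \<in> {1..fst F} \<and> j \<in> {1..fst F}" by auto
  qed
  have a: "\<forall>i. (i, i) \<notin> (fedges F)\<^sup>+" using trancl_dec[OF d] by blast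
  have r: "\<forall>i j. reach F i j \<longrightarrow> i > j" using trancl_dec[OF d] unfolding reach_def by blast
  show "heap_ordered F" unfolding heap_ordered_def ordered_forest_def using o a r by blast
qed

definition W :: "oforest \<Rightarrow> (nat \<Rightarrow> nat) set" where
  "W F = {w. w \<in> Sym (fst F) \<and> (\<forall>i j. snd F i = Some j \<longrightarrow> w j < w i)}"

lemma Sym_inv: "s \<in> Sym n \<Longrightarrow> inv s \<in> Sym n"
  by (simp add: Sym_def permutes_inv)

lemma S_F_char:
  assumes "F \<in> HO n"
  shows "s \<in> S_F F \<longleftrightarrow> s \<in> Sym n \<and> inv s \<in> W F"
proof -
  have d: "\<And>i j. snd F i = Some j \<Longrightarrow> j < i" using assms by (auto simp: HO_def)
  have n: "fst F = n" using assms by (simp add: HO_def)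
  have "(\<forall>i j. reach F i j \<longrightarrow> inv s i > inv s j) \<longleftrightarrow> (\<forall>i j. snd F i = Some j \<longrightarrow> inv s j < inv s i)"
  proof
    assume a: "\<forall>i j. reach F i j \<longrightarrow> inv s i > inv s j"
    show "\<forall>i j. snd F i = Some j \<longrightarrow> inv s j < inv s i"
    proof (intro allI impI)
      fix i j assume e: "snd F i = Some j"
      have "(i, j) \<in> fedges F" using e by (simp add: fedges_def)
      then have "reach F i j" using d[OF e] unfolding reach_def by (simp add: r_into_trancl')
      then show "inv s j < inv s i" using a by auto
    qed
  next
    assume a: "\<forall>i j. snd F i = Some j \<longrightarrow> inv s j < inv s i"
    show "\<forall>i j. reach F i j \<longrightarrow> inv s i > inv s j"
    proof (intro allI impI)
      fix i j assume "reach F i j"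
      then have "(i, j) \<in> (fedges F)\<^sup>+" by (simp add: reach_def)
      then show "inv s i > inv s j"
      proof (induction rule: trancl_induct)
        case (base y) then show ?case using a by (auto simp: fedges_def)
      next
        case (step y z) then show ?case using a by (fastforce simp: fedges_def)
      qed
    qed
  qed
  note eq = this
  have "s \<in> S_F F \<longleftrightarrow> s \<in> Sym n \<and> (\<forall>i j. reach F i j \<longrightarrow> inv s i > inv s j)"
    unfolding S_F_def n[symmetric] by simp
  also have "\<dots> \<longleftrightarrow> s \<in> Sym n \<and> inv s \<in> W F"
    unfolding W_def n using eq Sym_inv[of s n] by blast
  finally show ?thesis .
qed

definition Q :: "nat \<Rightarrow> nat option set" where "Q n = insert None (Some ` {1..n})"

definition ext :: "nat \<Rightarrow> oforest \<Rightarrow> nat option \<Rightarrow> oforest" where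
  "ext n G q = (Suc n, (snd G)(Suc n := q))"

lemma HO_none: "G \<in> HO n \<Longrightarrow> \<not> (1 \<le> i \<and> i \<le> n) \<Longrightarrow> snd G i = None"
proof (cases "snd G i")
  case (Some j)
  assume "G \<in> HO n" "\<not> (1 \<le> i \<and> i \<le> n)"
  then show ?thesis using Some unfolding HO_def by force
qed simp

lemma HO_0: "HO 0 = {(0, \<lambda>_. None)}"
proof (intro set_eqI iffI)
  fix F assume F: "F \<in> HO 0"
  then have "snd F = (\<lambda>_. None)" using HO_none[OF F] by (intro ext) simp
  moreover have "fst F = 0" using F by (simp add: HO_def)
  ultimately show "F \<in> {(0, \<lambda>_. None)}" by (cases F) simp
qed (simp add: HO_def)

lemma HO_I: "fst F = n \<Longrightarrow> (\<And>i j. snd F i = Some j \<Longrightarrow> 1 \<le> j \<and> j < i \<and> i \<le> n) \<Longrightarrow> F \<in> HO n"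
  unfolding HO_def by blast

lemma HO_D: "F \<in> HO n \<Longrightarrow> snd F i = Some j \<Longrightarrow> 1 \<le> j \<and> j < i \<and> i \<le> n"
  unfolding HO_def by blast

lemma HO_fst: "F \<in> HO n \<Longrightarrow> fst F = n"
  unfolding HO_def by blast

lemma ext_HO: "G \<in> HO n \<Longrightarrow> q \<in> Q n \<Longrightarrow> ext n G q \<in> HO (Suc n)"
proof -
  assume G: "G \<in> HO n" and q: "q \<in> Q n"
  show ?thesis
  proof (rule HO_I)
    show "fst (ext n G q) = Suc n" by (simp add: ext_def)
    fix i j assume e: "snd (ext n G q) i = Some j"
    then have e: "((snd G)(Suc n := q)) i = Some j" by (simp add: ext_def)
    show "1 \<le> j \<and> j < i \<and> i \<le> Suc n"
    proof (cases "i = Suc n")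
      case True
      then have "q = Some j" using e by simp
      then show ?thesis using q True by (auto simp: Q_def)
    next
      case False
      then have "snd G i = Some j" using e by simp
      then show ?thesis using HO_D[OF G] by force
    qed
  qed
qed

lemma HO_Suc: "HO (Suc n) = (\<lambda>(G,q). ext n G q) ` (HO n \<times> Q n)"
proof (intro set_eqI iffI)
  fix F assume F: "F \<in> HO (Suc n)"
  let ?G = "(n, (snd F)(Suc n := None))"
  have "?G \<in> HO n"
  proof (rule HO_I)
    fix i j assume e: "snd ?G i = Some j"
    then have "i \<noteq> Suc n" "snd F i = Some j" by (auto split: if_splits)
    then show "1 \<le> j \<and> j < i \<and> i \<le> n" using HO_D[OF F] by force
  qed simp
  moreover have "snd F (Suc n) \<in> Q n"
  proof (cases "snd F (Suc n)")
    case (Some j)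
    then show ?thesis using F unfolding HO_def Q_def by force
  qed (simp add: Q_def)
  moreover have "F = ext n ?G (snd F (Suc n))"
  proof -
    have "fst F = Suc n" using F by (simp add: HO_def)
    then show ?thesis unfolding ext_def by (cases F) simp
  qed
  ultimately show "F \<in> (\<lambda>(G,q). ext n G q) ` (HO n \<times> Q n)" by force
next
  fix F assume "F \<in> (\<lambda>(G,q). ext n G q) ` (HO n \<times> Q n)"
  then show "F \<in> HO (Suc n)" using ext_HO by auto
qed

lemma ext_inj: "inj_on (\<lambda>(G,q). ext n G q) (HO n \<times> Q n)"
proof (rule inj_onI, clarify)
  fix G q G' q' assume a: "G \<in> HO n" "q \<in> Q n" "G' \<in> HO n" "q' \<in> Q n" "ext n G q = ext n G' q'"
  have s: "(snd G)(Suc n := q) = (snd G')(Suc n := q')" using a(5) by (simp add: ext_def)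
  then have "q = q'" by (metis fun_upd_same)
  moreover have "snd G = snd G'"
  proof
    fix i show "snd G i = snd G' i"
      using s HO_none[OF a(1), of "Suc n"] HO_none[OF a(3), of "Suc n"] by (cases "i = Suc n") (auto dest: fun_cong[of _ _ i])
  qed
  moreover have "fst G = fst G'" using a by (simp add: HO_def)
  ultimately show "G = G' \<and> q = q'" by (simp add: prod_eq_iff)
qed

lemma finite_Q: "finite (Q n)" by (simp add: Q_def)

lemma finite_HO: "finite (HO n)"
  by (induction n) (auto simp: HO_0 HO_Suc finite_Q)

definition ins :: "nat \<Rightarrow> (nat \<Rightarrow> nat) \<Rightarrow> nat \<Rightarrow> nat \<Rightarrow> nat" where
  "ins n w j v = (if v = Suc n then j else if 1 \<le> v \<and> v \<le> n then (if w v < j then w v else Suc (w v)) else v)"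

lemma Sym_range: "w \<in> Sym n \<Longrightarrow> 1 \<le> v \<Longrightarrow> v \<le> n \<Longrightarrow> 1 \<le> w v \<and> w v \<le> n"
  unfolding Sym_def using permutes_in_image[of w "{1..n}" v] by auto

lemma Sym_out: "w \<in> Sym n \<Longrightarrow> \<not> (1 \<le> v \<and> v \<le> n) \<Longrightarrow> w v = v"
  unfolding Sym_def using permutes_not_in[of w "{1..n}" v] by auto

lemma Sym_inj: "w \<in> Sym n \<Longrightarrow> w a = w b \<Longrightarrow> a = b"
  unfolding Sym_def using permutes_inj[of w "{1..n}"] by (auto dest: injD)

lemma ins_mono:
  assumes "w \<in> Sym n" "1 \<le> a" "a \<le> n" "1 \<le> b" "b \<le> n"
  shows "ins n w j a < ins n w j b \<longleftrightarrow> w a < w b"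
  using assms by (auto simp: ins_def)

lemma ins_Sym:
  assumes w: "w \<in> Sym n" and j: "1 \<le> j" "j \<le> Suc n"
  shows "ins n w j \<in> Sym (Suc n)"
  unfolding Sym_def mem_Collect_eq
proof (rule inj_imp_permutes)
  show "inj_on (ins n w j) {1..Suc n}"
  proof (rule inj_onI)
    fix a b assume a: "a \<in> {1..Suc n}" and b: "b \<in> {1..Suc n}" and e: "ins n w j a = ins n w j b"
    show "a = b"
    proof (cases "a = Suc n")
      case True
      then show ?thesis using e b Sym_range[OF w, of b] by (auto simp: ins_def split: if_splits)
    next
      case False
      note aF = False
      show ?thesis
      proof (cases "b = Suc n")
        case True
        then show ?thesis using e a aF Sym_range[OF w, of a] by (auto simp: ins_def split: if_splits)
      next
        case False
        then have "w a = w b" using e a b aF Sym_range[OF w, of a] Sym_range[OF w, of b]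
          by (auto simp: ins_def split: if_splits)
        then show ?thesis by (rule Sym_inj[OF w])
      qed
    qed
  qed
  show "finite {1..Suc n}" by simp
  show "\<And>x. x \<in> {1..Suc n} \<Longrightarrow> ins n w j x \<in> {1..Suc n}"
    using j Sym_range[OF w] by (auto simp: ins_def)
  show "\<And>x. x \<notin> {1..Suc n} \<Longrightarrow> ins n w j x = x"
    by (auto simp: ins_def)
qed

definition del :: "nat \<Rightarrow> (nat \<Rightarrow> nat) \<Rightarrow> nat \<Rightarrow> nat" where
  "del n w v = (if 1 \<le> v \<and> v \<le> n then (if w v > w (Suc n) then w v - 1 else w v) else v)"

lemma del_Sym:
  assumes w: "w \<in> Sym (Suc n)"
  shows "del n w \<in> Sym n"
  unfolding Sym_def mem_Collect_eq
proof (rule inj_imp_permutes)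
  have ne: "\<And>v. 1 \<le> v \<Longrightarrow> v \<le> n \<Longrightarrow> w v \<noteq> w (Suc n)"
    using Sym_inj[OF w] by force
  show "inj_on (del n w) {1..n}"
  proof (rule inj_onI)
    fix a b assume a: "a \<in> {1..n}" and b: "b \<in> {1..n}" and e: "del n w a = del n w b"
    have "w a = w b" using e a b ne[of a] ne[of b] by (auto simp: del_def split: if_splits)
    then show "a = b" by (rule Sym_inj[OF w])
  qed
  show "finite {1..n}" by simp
  show "\<And>x. x \<in> {1..n} \<Longrightarrow> del n w x \<in> {1..n}"
  proof -
    fix x assume x: "x \<in> {1..n}"
    have "1 \<le> w x" "w x \<le> Suc n" using Sym_range[OF w, of x] x by auto
    moreover have "1 \<le> w (Suc n)" "w (Suc n) \<le> Suc n" using Sym_range[OF w, of "Suc n"] by auto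
    moreover have "w x \<noteq> w (Suc n)" using ne x by auto
    ultimately show "del n w x \<in> {1..n}" using x by (auto simp: del_def)
  qed
  show "\<And>x. x \<notin> {1..n} \<Longrightarrow> del n w x = x"
    by (auto simp: del_def)
qed

lemma ins_del:
  assumes w: "w \<in> Sym (Suc n)"
  shows "ins n (del n w) (w (Suc n)) = w"
proof
  fix v
  have ne: "\<And>v. 1 \<le> v \<Longrightarrow> v \<le> n \<Longrightarrow> w v \<noteq> w (Suc n)"
    using Sym_inj[OF w] by force
  show "ins n (del n w) (w (Suc n)) v = w v"
  proof (cases "1 \<le> v \<and> v \<le> n")
    case True
    then have "1 \<le> w v" using Sym_range[OF w, of v] by auto
    then show ?thesis using True ne[of v] by (auto simp: ins_def del_def)
  next
    case False
    then show ?thesis using Sym_out[OF w, of v] by (auto simp: ins_def del_def)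
  qed
qed

lemma Sym_Suc: "Sym (Suc n) = (\<lambda>(w,j). ins n w j) ` (Sym n \<times> {1..Suc n})"
proof (intro set_eqI iffI)
  fix w assume w: "w \<in> Sym (Suc n)"
  have "w (Suc n) \<in> {1..Suc n}" using Sym_range[OF w, of "Suc n"] by auto
  then show "w \<in> (\<lambda>(w,j). ins n w j) ` (Sym n \<times> {1..Suc n})"
    using ins_del[OF w] del_Sym[OF w] by (auto intro!: image_eqI[where x="(del n w, w (Suc n))"])
next
  fix w assume "w \<in> (\<lambda>(w,j). ins n w j) ` (Sym n \<times> {1..Suc n})"
  then show "w \<in> Sym (Suc n)" using ins_Sym by auto
qed

lemma ins_inj: "inj_on (\<lambda>(w,j). ins n w j) (Sym n \<times> {1..Suc n})"
proof (rule inj_onI, clarify)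
  fix w j w' j' assume a: "w \<in> Sym n" "j \<in> {1..Suc n}" "w' \<in> Sym n" "j' \<in> {1..Suc n}"
    and e: "ins n w j = ins n w' j'"
  have "j = j'" using fun_cong[OF e, of "Suc n"] by (simp add: ins_def)
  moreover have "w = w'"
  proof
    fix v show "w v = w' v"
    proof (cases "1 \<le> v \<and> v \<le> n")
      case True
      then show ?thesis using fun_cong[OF e, of v] \<open>j = j'\<close> by (auto simp: ins_def split: if_splits)
    next
      case False
      then show ?thesis using Sym_out[OF a(1)] Sym_out[OF a(3)] by simp
    qed
  qed
  ultimately show "w = w' \<and> j = j'" by simp
qed

lemma finite_Sym: "finite (Sym n)"
proof -
  have "Sym n = {s. s permutes {1..n}}" by (simp add: Sym_def)
  then show ?thesis using finite_permutations[of "{1..n}"] by simp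
qed


definition phi :: "nat \<Rightarrow> (oforest \<Rightarrow> 'k::field) \<Rightarrow> (nat \<Rightarrow> nat) \<Rightarrow> 'k" where
  "phi n c w = (\<Sum>F\<in>HO n. if w \<in> W F then c F else 0)"

definition ok :: "(nat \<Rightarrow> nat) \<Rightarrow> nat \<Rightarrow> nat option \<Rightarrow> bool" where
  "ok w j q = (case q of None \<Rightarrow> True | Some m \<Rightarrow> w m < j)"

lemma W_ext:
  assumes G: "G \<in> HO n" and q: "q \<in> Q n" and w: "w \<in> Sym n" and j: "1 \<le> j" "j \<le> Suc n"
  shows "ins n w j \<in> W (ext n G q) \<longleftrightarrow> w \<in> W G \<and> ok w j q"
proof -
  have fG: "fst G = n" using G by (rule HO_fst)
  have edge: "\<And>i m. snd G i = Some m \<Longrightarrow> 1 \<le> m \<and> m < i \<and> i \<le> n" using HO_D[OF G] by blast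
  have qm: "\<And>m. q = Some m \<Longrightarrow> 1 \<le> m \<and> m \<le> n" using q by (auto simp: Q_def)
  have "ins n w j \<in> W (ext n G q) \<longleftrightarrow>
     (\<forall>i m. ((snd G)(Suc n := q)) i = Some m \<longrightarrow> ins n w j m < ins n w j i)"
    unfolding W_def ext_def using ins_Sym[OF w j] by simp
  also have "\<dots> \<longleftrightarrow> (\<forall>i m. snd G i = Some m \<longrightarrow> ins n w j m < ins n w j i) \<and>
      (\<forall>m. q = Some m \<longrightarrow> ins n w j m < ins n w j (Suc n))"
  proof -
    have N: "snd G (Suc n) = None" using HO_none[OF G, of "Suc n"] by simp
    let ?P = "\<lambda>i m. ins n w j m < ins n w j i"
    have "(\<forall>i m. ((snd G)(Suc n := q)) i = Some m \<longrightarrow> ?P i m) \<longleftrightarrow>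
      (\<forall>i m. snd G i = Some m \<longrightarrow> ?P i m) \<and> (\<forall>m. q = Some m \<longrightarrow> ?P (Suc n) m)"
    proof (intro iffI conjI allI impI)
      fix i m assume a: "\<forall>i m. ((snd G)(Suc n := q)) i = Some m \<longrightarrow> ?P i m" and e: "snd G i = Some m"
      then have "i \<noteq> Suc n" using N by auto
      then show "?P i m" using a e by (metis fun_upd_other)
    next
      fix m assume a: "\<forall>i m. ((snd G)(Suc n := q)) i = Some m \<longrightarrow> ?P i m" and e: "q = Some m"
      then show "?P (Suc n) m" by (metis fun_upd_same)
    next
      fix i m assume a: "(\<forall>i m. snd G i = Some m \<longrightarrow> ?P i m) \<and> (\<forall>m. q = Some m \<longrightarrow> ?P (Suc n) m)"
        and e: "((snd G)(Suc n := q)) i = Some m"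
      show "?P i m"
      proof (cases "i = Suc n")
        case True then show ?thesis using a e by simp
      next
        case False then show ?thesis using a e by simp
      qed
    qed
    then show ?thesis by simp
  qed
  also have "\<dots> \<longleftrightarrow> (\<forall>i m. snd G i = Some m \<longrightarrow> w m < w i) \<and> ok w j q"
  proof -
    have 1: "(\<forall>i m. snd G i = Some m \<longrightarrow> ins n w j m < ins n w j i) \<longleftrightarrow> (\<forall>i m. snd G i = Some m \<longrightarrow> w m < w i)"
    proof -
      have "\<And>i m. snd G i = Some m \<Longrightarrow> ins n w j m < ins n w j i \<longleftrightarrow> w m < w i"
      proof -
        fix i m assume e: "snd G i = Some m"
        then have "1 \<le> m" "m < i" "i \<le> n" using edge by blast+
        then show "ins n w j m < ins n w j i \<longleftrightarrow> w m < w i" using ins_mono[OF w, of m i j] by simp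
      qed
      then show ?thesis by blast
    qed
    have 2: "(\<forall>m. q = Some m \<longrightarrow> ins n w j m < ins n w j (Suc n)) \<longleftrightarrow> ok w j q"
    proof (cases q)
      case None then show ?thesis by (simp add: ok_def)
    next
      case (Some m)
      then have "1 \<le> m \<and> m \<le> n" using qm by simp
      then show ?thesis using Some by (auto simp: ok_def ins_def)
    qed
    show ?thesis using 1 2 by simp
  qed
  also have "\<dots> \<longleftrightarrow> w \<in> W G \<and> ok w j q" unfolding W_def fG using w by simp
  finally show ?thesis .
qed

lemma phi_Suc:
  assumes w: "w \<in> Sym n" and j: "1 \<le> j" "j \<le> Suc n"
  shows "phi (Suc n) c (ins n w j) = (\<Sum>q\<in>Q n. if ok w j q then phi n (\<lambda>G. c (ext n G q)) w else 0)"
proof -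
  have "phi (Suc n) c (ins n w j) = (\<Sum>F\<in>(\<lambda>(G,q). ext n G q) ` (HO n \<times> Q n). if ins n w j \<in> W F then c F else 0)"
    unfolding phi_def HO_Suc ..
  also have "\<dots> = (\<Sum>(G,q)\<in>HO n \<times> Q n. if ins n w j \<in> W (ext n G q) then c (ext n G q) else 0)"
    by (subst sum.reindex[OF ext_inj]) (simp add: case_prod_unfold)
  also have "\<dots> = (\<Sum>(G,q)\<in>HO n \<times> Q n. if ok w j q then (if w \<in> W G then c (ext n G q) else 0) else 0)"
    by (rule sum.cong[OF refl]) (auto simp: W_ext[OF _ _ w j])
  also have "\<dots> = (\<Sum>G\<in>HO n. \<Sum>q\<in>Q n. if ok w j q then (if w \<in> W G then c (ext n G q) else 0) else 0)"
    by (simp add: sum.cartesian_product)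
  also have "\<dots> = (\<Sum>q\<in>Q n. \<Sum>G\<in>HO n. if ok w j q then (if w \<in> W G then c (ext n G q) else 0) else 0)"
    by (rule sum.swap)
  also have "\<dots> = (\<Sum>q\<in>Q n. if ok w j q then phi n (\<lambda>G. c (ext n G q)) w else 0)"
    by (rule sum.cong[OF refl]) (simp add: phi_def)
  finally show ?thesis .
qed

lemma Q_sum: "(\<Sum>q\<in>Q n. f q) = f None + (\<Sum>m\<in>{1..n}. f (Some m))"
proof -
  have "None \<notin> Some ` {1..n}" by auto
  then have "(\<Sum>q\<in>Q n. f q) = f None + (\<Sum>q\<in>Some ` {1..n}. f q)" unfolding Q_def by simp
  also have "(\<Sum>q\<in>Some ` {1..n}. f q) = (\<Sum>m\<in>{1..n}. f (Some m))"
  proof -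
    have "inj_on Some {1..n}" by (simp add: inj_on_def)
    from sum.reindex[OF this, of f] show ?thesis by (simp add: comp_def)
  qed
  finally show ?thesis .
qed

lemma Sym_0: "Sym 0 = {id}"
  unfolding Sym_def by (auto simp: permutes_empty)

lemma W_F0: "id \<in> W (0, \<lambda>_. None)"
  unfolding W_def Sym_def by (simp add: permutes_id)


lemma ok_None: "ok w j None" by (simp add: ok_def)
lemma ok_Some: "ok w j (Some m) \<longleftrightarrow> w m < j" by (simp add: ok_def)

lemma phi_Suc':
  assumes w: "w \<in> Sym n" and j: "1 \<le> j" "j \<le> Suc n"
  shows "phi (Suc n) c (ins n w j) = phi n (\<lambda>G. c (ext n G None)) w +
     (\<Sum>m\<in>{1..n}. if w m < j then phi n (\<lambda>G. c (ext n G (Some m))) w else 0)"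
  unfolding phi_Suc[OF w j] Q_sum by (simp add: ok_None ok_Some)

lemma Inj: "(\<forall>w\<in>Sym n. phi n c w = 0) \<Longrightarrow> (\<forall>F\<in>HO n. c F = 0)"
proof (induction n arbitrary: c)
  case 0
  then have "phi 0 c id = 0" unfolding Sym_0 by blast
  then show ?case by (simp add: phi_def HO_0 W_F0)
next
  case (Suc n)
  define X where "X q w = phi n (\<lambda>G. c (ext n G q)) w" for q w
  have g: "X None w + (\<Sum>m\<in>{1..n}. if w m < j then X (Some m) w else 0) = 0"
    if w: "w \<in> Sym n" and j: "1 \<le> j" "j \<le> Suc n" for w j
    using Suc.prems ins_Sym[OF w j] phi_Suc'[OF w j, of c] unfolding X_def by simp
  have XN: "X None w = 0" if w: "w \<in> Sym n" for w
  proof -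
    have "(\<Sum>m\<in>{1..n}. if w m < 1 then X (Some m) w else 0) = 0"
      by (rule sum.neutral) (use Sym_range[OF w] in force)
    then show ?thesis using g[OF w, of 1] by simp
  qed
  have XS: "X (Some m0) w = 0" if w: "w \<in> Sym n" and m0: "1 \<le> m0" "m0 \<le> n" for w m0
  proof -
    have r: "1 \<le> w m0" "w m0 \<le> n" using Sym_range[OF w m0] by auto
    have "(\<Sum>m\<in>{1..n}. if w m < Suc (w m0) then X (Some m) w else 0) =
       (\<Sum>m\<in>{1..n}. (if w m < w m0 then X (Some m) w else 0) + (if m = m0 then X (Some m) w else 0))"
    proof (rule sum.cong[OF refl])
      fix m assume "m \<in> {1..n}"
      show "(if w m < Suc (w m0) then X (Some m) w else 0) =
        (if w m < w m0 then X (Some m) w else 0) + (if m = m0 then X (Some m) w else 0)"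
      proof (cases "m = m0")
        case True then show ?thesis by simp
      next
        case False
        then have "w m \<noteq> w m0" using Sym_inj[OF w] by blast
        then show ?thesis using False by auto
      qed
    qed
    also have "\<dots> = (\<Sum>m\<in>{1..n}. if w m < w m0 then X (Some m) w else 0) + X (Some m0) w"
      using m0 by (simp add: sum.distrib)
    finally have e: "(\<Sum>m\<in>{1..n}. if w m < Suc (w m0) then X (Some m) w else 0) = (\<Sum>m\<in>{1..n}. if w m < w m0 then X (Some m) w else 0) + X (Some m0) w" .
    have "X None w + (\<Sum>m\<in>{1..n}. if w m < Suc (w m0) then X (Some m) w else 0) = 0"
      using g[OF w, of "Suc (w m0)"] r by simp
    moreover have "X None w + (\<Sum>m\<in>{1..n}. if w m < w m0 then X (Some m) w else 0) = 0"
      using g[OF w, of "w m0"] r by simp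
    ultimately show ?thesis unfolding e by (metis add.assoc add_cancel_right_right)
  qed
  have X0: "\<forall>w\<in>Sym n. X q w = 0" if q: "q \<in> Q n" for q
    using q XN XS by (auto simp: Q_def)
  show ?case
  proof
    fix F assume "F \<in> HO (Suc n)"
    then obtain G q where G: "G \<in> HO n" "q \<in> Q n" and F: "F = ext n G q" unfolding HO_Suc by auto
    have "\<forall>G\<in>HO n. c (ext n G q) = 0" using Suc.IH[of "\<lambda>G. c (ext n G q)"] X0[OF G(2)] unfolding X_def by blast
    then show "c F = 0" using G F by blast
  qed
qed


lemma phi_lin: "phi n (\<lambda>G. a * c G) w = a * phi n c w"
  unfolding phi_def sum_distrib_left by (rule sum.cong) auto

lemma telescope:
  fixes f :: "nat \<Rightarrow> 'k::field"
  assumes v: "v \<in> Sym n" and j: "1 \<le> j" "j \<le> Suc n"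
  shows "f 1 + (\<Sum>m\<in>{1..n}. if v m < j then f (Suc (v m)) - f (v m) else 0) = f j"
proof -
  define h where "h i = (if i < j then f (Suc i) - f i else 0)" for i
  have b: "bij_betw v {1..n} {1..n}" using v unfolding Sym_def by (simp add: permutes_imp_bij)
  have e1: "(\<Sum>m\<in>{1..n}. if v m < j then f (Suc (v m)) - f (v m) else 0) = (\<Sum>m\<in>{1..n}. h (v m))"
    by (simp add: h_def)
  have e2: "(\<Sum>m\<in>{1..n}. h (v m)) = (\<Sum>i\<in>{1..n}. h i)" by (rule sum.reindex_bij_betw[OF b])
  have sub: "{1..<j} \<subseteq> {1..n}" using j by auto
  have e3: "(\<Sum>i\<in>{1..n}. h i) = (\<Sum>i\<in>{1..<j}. h i)"
    by (rule sum.mono_neutral_right) (use sub in \<open>auto simp: h_def\<close>)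
  have e4: "(\<Sum>i\<in>{1..<j}. h i) = (\<Sum>i\<in>{1..<j}. f (Suc i) - f i)" by (rule sum.cong) (auto simp: h_def)
  have e5: "(\<Sum>i\<in>{1..<j}. f (Suc i) - f i) = f j - f 1" using j(1) by (rule sum_Suc_diff')
  show ?thesis unfolding e1 e2 e3 e4 e5 by (simp add: algebra_simps)
qed

lemma Surj: "v \<in> Sym n \<Longrightarrow> \<exists>c::oforest \<Rightarrow> 'k::field. \<forall>w\<in>Sym n. phi n c w = (if w = v then 1 else 0)"
proof (induction n arbitrary: v)
  case 0
  then have v: "v = id" by (simp add: Sym_0)
  have "id \<in> W (0, \<lambda>_. None)" by (rule W_F0)
  then show ?case unfolding v Sym_0 phi_def HO_0 by (intro exI[of _ "\<lambda>_. 1"]) simp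
next
  case (Suc n)
  obtain v0 j0 where v0: "v0 \<in> Sym n" and j0: "1 \<le> j0" "j0 \<le> Suc n" and vv: "v = ins n v0 j0"
    using Suc.prems unfolding Sym_Suc by auto
  obtain d :: "oforest \<Rightarrow> 'k" where d: "\<forall>w\<in>Sym n. phi n d w = (if w = v0 then 1 else 0)"
    using Suc.IH[OF v0] by blast
  define f :: "nat \<Rightarrow> 'k" where "f j = (if j = j0 then 1 else 0)" for j
  define \<alpha> where "\<alpha> q = (case q of None \<Rightarrow> f 1 | Some m \<Rightarrow> f (Suc (v0 m)) - f (v0 m))" for q
  define c :: "oforest \<Rightarrow> 'k" where "c F = \<alpha> (snd F (Suc n)) * d (n, (snd F)(Suc n := None))" for F
  have cext: "c (ext n G q) = \<alpha> q * d G" if G: "G \<in> HO n" for G q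
  proof -
    have N: "snd G (Suc n) = None" using HO_none[OF G, of "Suc n"] by simp
    have "(n, (snd G)(Suc n := q, Suc n := None)) = G"
      using N HO_fst[OF G] by (cases G) (simp add: fun_upd_idem)
    then show ?thesis unfolding c_def ext_def by simp
  qed
  show ?case
  proof (rule exI[of _ c], intro ballI)
    fix w' assume "w' \<in> Sym (Suc n)"
    then obtain w j where w: "w \<in> Sym n" and j: "1 \<le> j" "j \<le> Suc n" and ww: "w' = ins n w j"
      unfolding Sym_Suc by auto
    have pq: "phi n (\<lambda>G. c (ext n G q)) w = \<alpha> q * (if w = v0 then 1 else 0)" for q
    proof -
      have "phi n (\<lambda>G. c (ext n G q)) w = phi n (\<lambda>G. \<alpha> q * d G) w"
        unfolding phi_def by (rule sum.cong) (auto simp: cext)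
      also have "\<dots> = \<alpha> q * phi n d w" by (rule phi_lin)
      finally show ?thesis using d w by simp
    qed
    have "phi (Suc n) c w' = (if w = v0 then f 1 + (\<Sum>m\<in>{1..n}. if w m < j then f (Suc (v0 m)) - f (v0 m) else 0) else 0)"
    proof (cases "w = v0")
      case True
      have "(\<Sum>m\<in>{1..n}. if w m < j then \<alpha> (Some m) * 1 else 0) =
            (\<Sum>m\<in>{1..n}. if w m < j then f (Suc (v0 m)) - f (v0 m) else 0)"
        by (rule sum.cong) (auto simp: \<alpha>_def True)
      then show ?thesis unfolding ww phi_Suc'[OF w j] pq using True by (simp add: \<alpha>_def)
    next
      case False
      have "(\<Sum>m\<in>{1..n}. if w m < j then \<alpha> (Some m) * 0 else 0) = 0"
        by (rule sum.neutral) auto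
      then show ?thesis unfolding ww phi_Suc'[OF w j] pq using False by simp
    qed
    also have "\<dots> = (if w = v0 then f j else 0)" using telescope[OF v0 j, of f] by simp
    also have "\<dots> = (if w' = v then 1 else 0)"
    proof -
      have "w' = v \<longleftrightarrow> w = v0 \<and> j = j0"
        using ins_inj[of n] w j v0 j0 unfolding ww vv inj_on_def by auto
      then show ?thesis by (simp add: f_def)
    qed
    finally show "phi (Suc n) c w' = (if w' = v then 1 else 0)" .
  qed
qed


lemma finite_S_F: "finite (S_F F)"
  by (rule finite_subset[OF _ finite_Sym[of "fst F"]]) (auto simp: S_F_def)

lemma lookup_single_if: "Poly_Mapping.lookup (Poly_Mapping.single k v) k' = (if k = k' then v else 0)"
  by (simp add: lookup_single)

lemma Theta_lookup:
  "Poly_Mapping.lookup (Theta x) (n, s) = (\<Sum>F\<in>Poly_Mapping.keys x. if fst F = n \<and> s \<in> S_F F then Poly_Mapping.lookup x F else 0)"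
proof -
  have "Poly_Mapping.lookup (Theta x) (n, s) = (\<Sum>F\<in>Poly_Mapping.keys x. \<Sum>s'\<in>S_F F. if (fst F, s') = (n, s) then Poly_Mapping.lookup x F else 0)"
    unfolding Theta_def lookup_sum lookup_single_if ..
  also have "\<dots> = (\<Sum>F\<in>Poly_Mapping.keys x. if fst F = n \<and> s \<in> S_F F then Poly_Mapping.lookup x F else 0)"
  proof (rule sum.cong[OF refl])
    fix F
    have "(\<Sum>s'\<in>S_F F. if (fst F, s') = (n, s) then Poly_Mapping.lookup x F else 0) =
          (\<Sum>s'\<in>S_F F. if s' = s then (if fst F = n then Poly_Mapping.lookup x F else 0) else 0)"
      by (rule sum.cong) auto
    also have "\<dots> = (if fst F = n \<and> s \<in> S_F F then Poly_Mapping.lookup x F else 0)"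
      by (simp add: sum.delta[OF finite_S_F])
    finally show "(\<Sum>s'\<in>S_F F. if (fst F, s') = (n, s) then Poly_Mapping.lookup x F else 0) =
          (if fst F = n \<and> s \<in> S_F F then Poly_Mapping.lookup x F else 0)" .
  qed
  finally show ?thesis .
qed

lemma H_ho_keys: "x \<in> H_ho \<Longrightarrow> F \<in> Poly_Mapping.keys x \<Longrightarrow> F \<in> HO (fst F)"
  unfolding H_ho_def using ho_char by blast

lemma H_ho_I: "(\<And>F. F \<in> Poly_Mapping.keys x \<Longrightarrow> heap_ordered F) \<Longrightarrow> x \<in> H_ho"
  unfolding H_ho_def by blast

lemma Theta_ho:
  assumes x: "x \<in> H_ho"
  shows "Poly_Mapping.lookup (Theta x) (n, s) = (if s \<in> Sym n then phi n (Poly_Mapping.lookup x) (inv s) else 0)"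
proof -
  define g where "g F = (if F \<in> HO n \<and> s \<in> S_F F then Poly_Mapping.lookup x F else 0)" for F
  have fin: "finite (Poly_Mapping.keys x \<union> HO n)" by (simp add: finite_HO)
  have "Poly_Mapping.lookup (Theta x) (n, s) = (\<Sum>F\<in>Poly_Mapping.keys x. g F)"
    unfolding Theta_lookup
  proof (rule sum.cong[OF refl])
    fix F assume F: "F \<in> Poly_Mapping.keys x"
    have hf: "F \<in> HO (fst F)" by (rule H_ho_keys[OF x F])
    have "fst F = n \<longleftrightarrow> F \<in> HO n"
    proof
      assume "fst F = n" then show "F \<in> HO n" using hf by simp
    qed (rule HO_fst)
    then show "(if fst F = n \<and> s \<in> S_F F then Poly_Mapping.lookup x F else 0) = g F" by (simp add: g_def)
  qed
  also have "\<dots> = (\<Sum>F\<in>Poly_Mapping.keys x \<union> HO n. g F)"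
    by (rule sum.mono_neutral_left[OF fin]) (auto simp: g_def in_keys_iff)
  also have "\<dots> = (\<Sum>F\<in>HO n. g F)"
    by (rule sum.mono_neutral_right[OF fin]) (auto simp: g_def in_keys_iff)
  also have "\<dots> = (\<Sum>F\<in>HO n. if s \<in> Sym n then (if inv s \<in> W F then Poly_Mapping.lookup x F else 0) else 0)"
    by (rule sum.cong[OF refl]) (simp add: g_def S_F_char)
  also have "\<dots> = (if s \<in> Sym n then phi n (Poly_Mapping.lookup x) (inv s) else 0)"
    by (simp add: phi_def)
  finally show ?thesis .
qed

lemma Sym_inv_inv: "s \<in> Sym n \<Longrightarrow> inv (inv s) = s"
  unfolding Sym_def by (simp add: permutes_inv_inv)

lemma phi_diff: "phi n (\<lambda>G. a G - b G) w = phi n a w - phi n b w"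
  unfolding phi_def by (simp add: sum_subtractf[symmetric] if_distrib cong: if_cong)

lemma Theta_inj:
  assumes x: "x \<in> H_ho" and y: "y \<in> H_ho" and e: "Theta x = Theta y"
  shows "x = y"
proof (rule poly_mapping_eqI)
  fix F
  show "Poly_Mapping.lookup x F = Poly_Mapping.lookup y F"
  proof (cases "F \<in> HO (fst F)")
    case True
    let ?m = "fst F"
    have "\<forall>w\<in>Sym ?m. phi ?m (\<lambda>G. Poly_Mapping.lookup x G - Poly_Mapping.lookup y G) w = 0"
    proof
      fix w assume w: "w \<in> Sym ?m"
      have iw: "inv w \<in> Sym ?m" using w by (rule Sym_inv)
      have "phi ?m (Poly_Mapping.lookup x) w = Poly_Mapping.lookup (Theta x) (?m, inv w)"
        using Theta_ho[OF x, of ?m "inv w"] iw Sym_inv_inv[OF w] by simp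
      moreover have "phi ?m (Poly_Mapping.lookup y) w = Poly_Mapping.lookup (Theta y) (?m, inv w)"
        using Theta_ho[OF y, of ?m "inv w"] iw Sym_inv_inv[OF w] by simp
      ultimately show "phi ?m (\<lambda>G. Poly_Mapping.lookup x G - Poly_Mapping.lookup y G) w = 0"
        using e by (simp add: phi_diff)
    qed
    from Inj[OF this] True show ?thesis by simp
  next
    case False
    then have "F \<notin> Poly_Mapping.keys x" "F \<notin> Poly_Mapping.keys y" using H_ho_keys x y by blast+
    then show ?thesis by (simp add: in_keys_iff)
  qed
qed


lemma Tsig_exists:
  assumes v: "v \<in> Sym n"
  shows "\<exists>x::oforest \<Rightarrow>\<^sub>0 'k::field. x \<in> H_ho \<and> Theta x = Poly_Mapping.single (n, inv v) 1"
proof -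
  obtain c :: "oforest \<Rightarrow> 'k" where c: "\<forall>w\<in>Sym n. phi n c w = (if w = v then 1 else 0)"
    using Surj[OF v] by blast
  define x :: "oforest \<Rightarrow>\<^sub>0 'k" where "x = (\<Sum>F\<in>HO n. Poly_Mapping.single F (c F))"
  have lx: "Poly_Mapping.lookup x F = (if F \<in> HO n then c F else 0)" for F
    unfolding x_def lookup_sum lookup_single_if by (simp add: sum.delta[OF finite_HO])
  have xh: "x \<in> H_ho"
  proof (rule H_ho_I)
    fix F assume "F \<in> Poly_Mapping.keys x"
    then have "F \<in> HO n" by (simp add: in_keys_iff lx split: if_splits)
    then have "fst F = n" by (rule HO_fst)
    then show "heap_ordered F" using ho_char \<open>F \<in> HO n\<close> by simp
  qed
  have "Theta x = Poly_Mapping.single (n, inv v) 1"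
  proof (rule poly_mapping_eqI, clarify)
    fix m s
    show "Poly_Mapping.lookup (Theta x) (m, s) = Poly_Mapping.lookup (Poly_Mapping.single (n, inv v) 1) (m, s)"
    proof (cases "s \<in> Sym m")
      case False
      have "s \<noteq> inv v \<or> m \<noteq> n" using False Sym_inv[OF v] by auto
      then show ?thesis using False by (auto simp: Theta_ho[OF xh] lookup_single_if)
    next
      case True
      show ?thesis
      proof (cases "m = n")
        case False
        have "phi m (Poly_Mapping.lookup x) (inv s) = 0"
          unfolding phi_def
        proof (rule sum.neutral, intro ballI)
          fix F assume "F \<in> HO m"
          then have "fst F = m" by (rule HO_fst)
          then have "F \<notin> HO n" using False HO_fst by blast
          then show "(if inv s \<in> W F then Poly_Mapping.lookup x F else 0) = 0" by (simp add: lx)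
        qed
        then show ?thesis using False True by (simp add: Theta_ho[OF xh] lookup_single_if)
      next
        case mn: True
        have "phi m (Poly_Mapping.lookup x) (inv s) = phi n c (inv s)"
          unfolding phi_def mn by (rule sum.cong) (auto simp: lx)
        also have "\<dots> = (if inv s = v then 1 else 0)" using c Sym_inv[OF True] mn by simp
        also have "\<dots> = (if s = inv v then 1 else 0)"
        proof -
          have "inv s = v \<longleftrightarrow> s = inv v"
          proof
            assume "inv s = v" then have "inv (inv s) = inv v" by simp
            then show "s = inv v" using Sym_inv_inv[OF True] by simp
          next
            assume "s = inv v" then show "inv s = v" using Sym_inv_inv[OF v] by simp
          qed
          then show ?thesis by simp
        qed
        finally show ?thesis using True mn by (simp add: Theta_ho[OF xh] lookup_single_if)
      qed
    qed
  qed
  then show ?thesis using xh by blast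
qed

lemma Tsig_spec:
  assumes v: "v \<in> Sym n"
  shows "(Tsig n v :: oforest \<Rightarrow>\<^sub>0 'k::field) \<in> H_ho \<and> Theta (Tsig n v :: oforest \<Rightarrow>\<^sub>0 'k) = Poly_Mapping.single (n, inv v) 1"
proof -
  obtain x :: "oforest \<Rightarrow>\<^sub>0 'k" where x: "x \<in> H_ho \<and> Theta x = Poly_Mapping.single (n, inv v) 1"
    using Tsig_exists[OF v] by blast
  show ?thesis unfolding Tsig_def
  proof (rule theI[of _ x])
    show "x \<in> H_ho \<and> Theta x = Poly_Mapping.single (n, inv v) 1" by (rule x)
    fix y :: "oforest \<Rightarrow>\<^sub>0 'k" assume "y \<in> H_ho \<and> Theta y = Poly_Mapping.single (n, inv v) 1"
    then show "y = x" using x Theta_inj[of y x] by simp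
  qed
qed


definition rank :: "(nat \<Rightarrow> nat) \<Rightarrow> nat \<Rightarrow> nat \<Rightarrow> nat" where
  "rank g m i = (if 1 \<le> i \<and> i \<le> m then card {j\<in>{1..m}. g j \<le> g i} else i)"

lemma rank_less:
  assumes g: "inj_on g {1..m}" and i: "1 \<le> i" "i \<le> m" and j: "1 \<le> j" "j \<le> m"
  shows "rank g m i < rank g m j \<longleftrightarrow> g i < g j"
proof
  assume lt: "g i < g j"
  have "j \<in> {x\<in>{1..m}. g x \<le> g j}" "j \<notin> {x\<in>{1..m}. g x \<le> g i}" using lt j by auto
  moreover have "{x\<in>{1..m}. g x \<le> g i} \<subseteq> {x\<in>{1..m}. g x \<le> g j}" using lt by auto
  ultimately have "{x\<in>{1..m}. g x \<le> g i} \<subset> {x\<in>{1..m}. g x \<le> g j}" by blast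
  then have "card {x\<in>{1..m}. g x \<le> g i} < card {x\<in>{1..m}. g x \<le> g j}"
    by (rule psubset_card_mono[rotated]) simp
  then show "rank g m i < rank g m j" using i j by (simp add: rank_def)
next
  assume lt: "rank g m i < rank g m j"
  show "g i < g j"
  proof (rule ccontr)
    assume "\<not> g i < g j"
    then have "{x\<in>{1..m}. g x \<le> g j} \<subseteq> {x\<in>{1..m}. g x \<le> g i}" by auto
    then have "card {x\<in>{1..m}. g x \<le> g j} \<le> card {x\<in>{1..m}. g x \<le> g i}"
      by (rule card_mono[rotated]) simp
    then show False using lt i j by (simp add: rank_def)
  qed
qed

lemma rank_Sym:
  assumes g: "inj_on g {1..m}"
  shows "rank g m \<in> Sym m"
  unfolding Sym_def mem_Collect_eq
proof (rule inj_imp_permutes)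
  show "inj_on (rank g m) {1..m}"
  proof (rule inj_onI)
    fix i j assume i: "i \<in> {1..m}" and j: "j \<in> {1..m}" and e: "rank g m i = rank g m j"
    then have "\<not> g i < g j" "\<not> g j < g i" using rank_less[OF g, of i j] rank_less[OF g, of j i] by auto
    then have "g i = g j" by simp
    then show "i = j" using g i j by (auto dest: inj_onD)
  qed
  show "finite {1..m}" by simp
  show "\<And>x. x \<in> {1..m} \<Longrightarrow> rank g m x \<in> {1..m}"
  proof -
    fix x assume x: "x \<in> {1..m}"
    have "x \<in> {j\<in>{1..m}. g j \<le> g x}" using x by simp
    then have ne: "{j\<in>{1..m}. g j \<le> g x} \<noteq> {}" by blast
    have "finite {j\<in>{1..m}. g j \<le> g x}" by simp
    then have "card {j\<in>{1..m}. g j \<le> g x} > 0" using ne by (simp add: card_gt_0_iff)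
    then have "card {j\<in>{1..m}. g j \<le> g x} \<ge> 1" by simp
    moreover have "card {j\<in>{1..m}. g j \<le> g x} \<le> card {1..m}" by (rule card_mono) auto
    ultimately show "rank g m x \<in> {1..m}" using x by (simp add: rank_def)
  qed
  show "\<And>x. x \<notin> {1..m} \<Longrightarrow> rank g m x = x" unfolding rank_def by auto
qed

lemma incr_id:
  assumes p: "p \<in> Sym m" and inc: "\<And>i j. 1 \<le> i \<Longrightarrow> i < j \<Longrightarrow> j \<le> m \<Longrightarrow> p i < p j"
  shows "p = id"
proof
  fix x
  have up: "i \<le> m \<longrightarrow> i \<le> p i" if "1 \<le> i" for i
    using that
  proof (induction i rule: dec_induct)
    case base then show ?case using Sym_range[OF p, of 1] by simp
  next
    case (step i)
    show ?case
    proof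
      assume "Suc i \<le> m"
      then have "p i < p (Suc i)" using inc[of i "Suc i"] step by simp
      then show "Suc i \<le> p (Suc i)" using step \<open>Suc i \<le> m\<close> by simp
    qed
  qed
  have down: "m - d \<ge> 1 \<longrightarrow> p (m - d) \<le> m - d" for d
  proof (induction d)
    case 0 then show ?case using Sym_range[OF p, of m] by simp
  next
    case (Suc d)
    show ?case
    proof
      assume a: "m - Suc d \<ge> 1"
      then have "p (m - Suc d) < p (m - d)" using inc[of "m - Suc d" "m - d"] by simp
      moreover have e: "m - d = Suc (m - Suc d)" using a by arith
      moreover have "p (m - d) \<le> m - d" using Suc a e by simp
      ultimately show "p (m - Suc d) \<le> m - Suc d" by simp
    qed
  qed
  show "p x = id x"
  proof (cases "1 \<le> x \<and> x \<le> m")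
    case True
    have "p x \<le> x" using down[of "m - x"] True by simp
    moreover have "x \<le> p x" using up[of x] True by simp
    ultimately show ?thesis by simp
  next
    case False then show ?thesis using Sym_out[OF p] by simp
  qed
qed


lemma snd_fmul: "snd (fmul F G) i = (if i \<le> fst F then snd F i else map_option (\<lambda>j. j + fst F) (snd G (i - fst F)))"
  by (simp add: fmul_def)

lemma fmul_edge:
  assumes F: "F \<in> HO k" and G: "G \<in> HO l" and e: "snd (fmul F G) i = Some j"
  shows "(1 \<le> j \<and> j < i \<and> i \<le> k) \<or> (k < j \<and> j < i \<and> i \<le> k + l)"
proof (cases "i \<le> k")
  case True
  then have "snd F i = Some j" using e HO_fst[OF F] by (simp add: snd_fmul)
  then show ?thesis using HO_D[OF F] by blast
next
  case False
  then obtain j' where j': "snd G (i - k) = Some j'" "j = j' + k" using e HO_fst[OF F] by (auto simp: snd_fmul)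
  then have "1 \<le> j' \<and> j' < i - k \<and> i - k \<le> l" using HO_D[OF G] by blast
  then show ?thesis using j' False by auto
qed

lemma W_fmul:
  assumes F: "F \<in> HO k" and G: "G \<in> HO l" and y: "y \<in> Sym (k + l)"
  shows "y \<in> W (fmul F G) \<longleftrightarrow> rank y k \<in> W F \<and> rank (\<lambda>i. y (k + i)) l \<in> W G"
proof -
  have fF: "fst F = k" using HO_fst[OF F] .
  have fG: "fst G = l" using HO_fst[OF G] .
  have yinj: "\<And>a b. y a = y b \<Longrightarrow> a = b" using Sym_inj[OF y] by blast
  have i1: "inj_on y {1..k}" by (meson inj_onI yinj)
  have i2: "inj_on (\<lambda>i. y (k + i)) {1..l}" by (rule inj_onI) (use yinj in force)
  have "y \<in> W (fmul F G) \<longleftrightarrow> (\<forall>i j. snd (fmul F G) i = Some j \<longrightarrow> y j < y i)"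
    unfolding W_def using y fF fG by (simp add: fmul_def)
  also have "\<dots> \<longleftrightarrow> (\<forall>i j. snd F i = Some j \<longrightarrow> y j < y i) \<and> (\<forall>i j. snd G i = Some j \<longrightarrow> y (k + j) < y (k + i))"
  proof (intro iffI conjI allI impI)
    fix i j assume a: "\<forall>i j. snd (fmul F G) i = Some j \<longrightarrow> y j < y i" and e: "snd F i = Some j"
    have "i \<le> k" using HO_D[OF F e] by simp
    then have "snd (fmul F G) i = Some j" using e fF by (simp add: snd_fmul)
    then show "y j < y i" using a by blast
  next
    fix i j assume a: "\<forall>i j. snd (fmul F G) i = Some j \<longrightarrow> y j < y i" and e: "snd G i = Some j"
    have "1 \<le> i" using HO_D[OF G e] by simp
    then have "snd (fmul F G) (k + i) = Some (k + j)" using e fF by (simp add: snd_fmul add.commute)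
    then show "y (k + j) < y (k + i)" using a by blast
  next
    fix i j assume a: "(\<forall>i j. snd F i = Some j \<longrightarrow> y j < y i) \<and> (\<forall>i j. snd G i = Some j \<longrightarrow> y (k + j) < y (k + i))"
      and e: "snd (fmul F G) i = Some j"
    show "y j < y i"
    proof (cases "i \<le> k")
      case True
      then have "snd F i = Some j" using e fF by (simp add: snd_fmul)
      then show ?thesis using a by blast
    next
      case False
      then obtain j' where j': "snd G (i - k) = Some j'" "j = j' + k" using e fF by (auto simp: snd_fmul)
      then have "y (k + j') < y (k + (i - k))" using a by blast
      then show ?thesis using j' False by (simp add: add.commute)
    qed
  qed
  also have "\<dots> \<longleftrightarrow> rank y k \<in> W F \<and> rank (\<lambda>i. y (k + i)) l \<in> W G"
  proof -
    have "(\<forall>i j. snd F i = Some j \<longrightarrow> y j < y i) \<longleftrightarrow> (\<forall>i j. snd F i = Some j \<longrightarrow> rank y k j < rank y k i)"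
    proof -
      have "\<And>i j. snd F i = Some j \<Longrightarrow> (y j < y i \<longleftrightarrow> rank y k j < rank y k i)"
      proof -
        fix i j assume "snd F i = Some j"
        then have "1 \<le> j" "j < i" "i \<le> k" using HO_D[OF F] by blast+
        then show "y j < y i \<longleftrightarrow> rank y k j < rank y k i" using rank_less[OF i1, of j i] by simp
      qed
      then show ?thesis by blast
    qed
    moreover have "(\<forall>i j. snd G i = Some j \<longrightarrow> y (k + j) < y (k + i)) \<longleftrightarrow>
        (\<forall>i j. snd G i = Some j \<longrightarrow> rank (\<lambda>i. y (k + i)) l j < rank (\<lambda>i. y (k + i)) l i)"
    proof -
      have "\<And>i j. snd G i = Some j \<Longrightarrow> (y (k + j) < y (k + i) \<longleftrightarrow> rank (\<lambda>i. y (k + i)) l j < rank (\<lambda>i. y (k + i)) l i)"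
      proof -
        fix i j assume "snd G i = Some j"
        then have "1 \<le> j" "j < i" "i \<le> l" using HO_D[OF G] by blast+
        then show "y (k + j) < y (k + i) \<longleftrightarrow> rank (\<lambda>i. y (k + i)) l j < rank (\<lambda>i. y (k + i)) l i"
          using rank_less[OF i2, of j i] by simp
      qed
      then show ?thesis by blast
    qed
    ultimately show ?thesis unfolding W_def fF fG using rank_Sym[OF i1] rank_Sym[OF i2] by simp
  qed
  finally show ?thesis .
qed

lemma W_fact:
  assumes p: "p \<in> Sym n" and w: "w \<in> Sym n" and fF: "fst F = n"
  shows "w \<in> W (fact p F) \<longleftrightarrow> w \<circ> p \<in> W F"
proof -
  have wp: "w \<circ> p \<in> Sym n" using p w unfolding Sym_def by (simp add: permutes_compose)
  have pp: "\<And>x. p (inv p x) = x" "\<And>x. inv p (p x) = x"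
    using p unfolding Sym_def by (simp_all add: permutes_inverses)
  have "w \<in> W (fact p F) \<longleftrightarrow> (\<forall>j m. map_option p (snd F (inv p j)) = Some m \<longrightarrow> w m < w j)"
    unfolding W_def fact_def using w fF by simp
  also have "\<dots> \<longleftrightarrow> (\<forall>i m. snd F i = Some m \<longrightarrow> w (p m) < w (p i))"
  proof (intro iffI allI impI)
    fix i m assume a: "\<forall>j m. map_option p (snd F (inv p j)) = Some m \<longrightarrow> w m < w j" and e: "snd F i = Some m"
    have "map_option p (snd F (inv p (p i))) = Some (p m)" using e pp by simp
    then show "w (p m) < w (p i)" using a by blast
  next
    fix j m assume a: "\<forall>i m. snd F i = Some m \<longrightarrow> w (p m) < w (p i)" and e: "map_option p (snd F (inv p j)) = Some m"
    then obtain m' where "snd F (inv p j) = Some m'" "m = p m'" by auto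
    then have "snd F (inv p j) = Some m'" "m = p m'" by blast+
    then have "w (p m') < w (p (inv p j))" using a by blast
    then show "w m < w j" using pp \<open>m = p m'\<close> by simp
  qed
  also have "\<dots> \<longleftrightarrow> w \<circ> p \<in> W F" unfolding W_def fF using wp by simp
  finally show ?thesis .
qed

lemma fact_fact:
  assumes p: "p \<in> Sym n"
  shows "fact p (fact (inv p) H) = H" "fact (inv p) (fact p H) = H"
proof -
  have pp: "\<And>x. p (inv p x) = x" "\<And>x. inv p (p x) = x" "inv (inv p) = p"
    using p unfolding Sym_def by (simp_all add: permutes_inverses permutes_inv_inv)
  show "fact p (fact (inv p) H) = H" unfolding fact_def
    by (cases H) (simp add: pp option.map_comp comp_def option.map_ident)
  show "fact (inv p) (fact p H) = H" unfolding fact_def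
    by (cases H) (simp add: pp option.map_comp comp_def option.map_ident)
qed

lemma lookup_vact:
  assumes p: "p \<in> Sym n"
  shows "Poly_Mapping.lookup (vact (inv p) x) H = Poly_Mapping.lookup x (fact p H)"
proof -
  have "Poly_Mapping.lookup (vact (inv p) x) H = (\<Sum>F\<in>Poly_Mapping.keys x. if fact (inv p) F = H then Poly_Mapping.lookup x F else 0)"
    unfolding vact_def lookup_sum lookup_single_if ..
  also have "\<dots> = (\<Sum>F\<in>Poly_Mapping.keys x. if F = fact p H then Poly_Mapping.lookup x F else 0)"
  proof (rule sum.cong[OF refl])
    fix F
    have "fact (inv p) F = H \<longleftrightarrow> F = fact p H"
    proof
      assume "fact (inv p) F = H" then show "F = fact p H" using fact_fact(1)[OF p, of F] by simp
    next
      assume "F = fact p H" then show "fact (inv p) F = H" using fact_fact(2)[OF p, of H] by simp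
    qed
    then show "(if fact (inv p) F = H then Poly_Mapping.lookup x F else 0) = (if F = fact p H then Poly_Mapping.lookup x F else 0)" by simp
  qed
  also have "\<dots> = Poly_Mapping.lookup x (fact p H)"
    by (simp add: sum.delta in_keys_iff)
  finally show ?thesis .
qed

lemma lookup_vmul:
  assumes kx: "Poly_Mapping.keys x \<subseteq> HO k" and ky: "Poly_Mapping.keys y \<subseteq> HO l"
  shows "Poly_Mapping.lookup (vmul x y) H = (\<Sum>F\<in>HO k. \<Sum>G\<in>HO l. if fmul F G = H then Poly_Mapping.lookup x F * Poly_Mapping.lookup y G else 0)"
proof -
  have "Poly_Mapping.lookup (vmul x y) H = (\<Sum>F\<in>Poly_Mapping.keys x. \<Sum>G\<in>Poly_Mapping.keys y. if fmul F G = H then Poly_Mapping.lookup x F * Poly_Mapping.lookup y G else 0)"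
    unfolding vmul_def lookup_sum lookup_single_if ..
  also have "\<dots> = (\<Sum>F\<in>Poly_Mapping.keys x. \<Sum>G\<in>HO l. if fmul F G = H then Poly_Mapping.lookup x F * Poly_Mapping.lookup y G else 0)"
    by (intro sum.cong[OF refl] sum.mono_neutral_left) (use ky finite_HO in \<open>auto simp: in_keys_iff\<close>)
  also have "\<dots> = (\<Sum>F\<in>HO k. \<Sum>G\<in>HO l. if fmul F G = H then Poly_Mapping.lookup x F * Poly_Mapping.lookup y G else 0)"
  proof (rule sum.mono_neutral_left)
    show "finite (HO k)" by (rule finite_HO)
    show "Poly_Mapping.keys x \<subseteq> HO k" by (rule kx)
    show "\<forall>F\<in>HO k - Poly_Mapping.keys x. (\<Sum>G\<in>HO l. if fmul F G = H then Poly_Mapping.lookup x F * Poly_Mapping.lookup y G else 0) = 0"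
    proof
      fix F assume "F \<in> HO k - Poly_Mapping.keys x"
      then have z: "Poly_Mapping.lookup x F = 0" by (simp add: in_keys_iff)
      show "(\<Sum>G\<in>HO l. if fmul F G = H then Poly_Mapping.lookup x F * Poly_Mapping.lookup y G else 0) = 0"
        unfolding z by (simp cong: if_cong)
    qed
  qed
  finally show ?thesis .
qed


lemma Sym_bij: "p \<in> Sym n \<Longrightarrow> bij p"
  unfolding Sym_def by (simp add: permutes_bij)

lemma Sym_comp: "p \<in> Sym n \<Longrightarrow> q \<in> Sym n \<Longrightarrow> p \<circ> q \<in> Sym n"
  unfolding Sym_def by (simp add: permutes_compose)

lemma Sym_invs: "p \<in> Sym n \<Longrightarrow> p (inv p x) = x" "p \<in> Sym n \<Longrightarrow> inv p (p x) = x"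
  unfolding Sym_def by (simp_all add: permutes_inverses)

lemma Sym_pos: "w \<in> Sym n \<Longrightarrow> 1 \<le> v \<Longrightarrow> 1 \<le> w v"
  using Sym_range[of w n v] Sym_out[of w n v] by (cases "v \<le> n") auto

lemma ptensor_Sym:
  assumes s: "s \<in> Sym k" and t: "t \<in> Sym l"
  shows "ptensor k s t \<in> Sym (k + l)"
  unfolding Sym_def mem_Collect_eq
proof (rule inj_imp_permutes)
  show "inj_on (ptensor k s t) {1..k + l}"
  proof (rule inj_onI)
    fix a b assume a: "a \<in> {1..k+l}" and b: "b \<in> {1..k+l}" and e: "ptensor k s t a = ptensor k s t b"
    show "a = b"
    proof (cases "a \<le> k"; cases "b \<le> k")
      assume "a \<le> k" "b \<le> k"
      then show ?thesis using e Sym_inj[OF s] by (simp add: ptensor_def)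
    next
      assume "a \<le> k" "\<not> b \<le> k"
      moreover have "1 \<le> b - k" using \<open>\<not> b \<le> k\<close> by arith
      ultimately show ?thesis using e Sym_range[OF s, of a] a Sym_pos[OF t, of "b - k"] by (simp add: ptensor_def)
    next
      assume "\<not> a \<le> k" "b \<le> k"
      moreover have "1 \<le> a - k" using \<open>\<not> a \<le> k\<close> by arith
      ultimately show ?thesis using e Sym_range[OF s, of b] b Sym_pos[OF t, of "a - k"] by (simp add: ptensor_def)
    next
      assume "\<not> a \<le> k" "\<not> b \<le> k"
      then have "t (a - k) = t (b - k)" using e by (simp add: ptensor_def)
      then have "a - k = b - k" using Sym_inj[OF t] by blast
      then show ?thesis using \<open>\<not> a \<le> k\<close> \<open>\<not> b \<le> k\<close> by simp
    qed
  qed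
  show "finite {1..k + l}" by simp
  show "\<And>x. x \<in> {1..k + l} \<Longrightarrow> ptensor k s t x \<in> {1..k + l}"
  proof -
    fix x assume x: "x \<in> {1..k + l}"
    show "ptensor k s t x \<in> {1..k + l}"
    proof (cases "x \<le> k")
      case True then show ?thesis using Sym_range[OF s, of x] x by (simp add: ptensor_def)
    next
      case False
      then have "1 \<le> x - k" "x - k \<le> l" using x by auto
      then show ?thesis using Sym_range[OF t, of "x - k"] False by (simp add: ptensor_def)
    qed
  qed
  show "\<And>x. x \<notin> {1..k + l} \<Longrightarrow> ptensor k s t x = x"
  proof -
    fix x assume x: "x \<notin> {1..k + l}"
    show "ptensor k s t x = x"
    proof (cases "x \<le> k")
      case True then have "x = 0" using x by simp
      then show ?thesis using Sym_out[OF s, of 0] by (simp add: ptensor_def)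
    next
      case False
      then have "\<not> (1 \<le> x - k \<and> x - k \<le> l)" "k + (x - k) = x" using x by auto
      then show ?thesis using Sym_out[OF t, of "x - k"] False by (simp add: ptensor_def)
    qed
  qed
qed

lemma ptensor_comp:
  assumes s: "s \<in> Sym k" and t: "t \<in> Sym l" and s': "s' \<in> Sym k" and t': "t' \<in> Sym l"
  shows "ptensor k s t \<circ> ptensor k s' t' = ptensor k (s \<circ> s') (t \<circ> t')"
proof
  fix i
  show "(ptensor k s t \<circ> ptensor k s' t') i = ptensor k (s \<circ> s') (t \<circ> t') i"
  proof (cases "i \<le> k")
    case True
    have "s' i \<le> k"
    proof (cases "i = 0")
      case True then show ?thesis using Sym_out[OF s', of 0] by simp
    next
      case False then show ?thesis using Sym_range[OF s', of i] \<open>i \<le> k\<close> by simp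
    qed
    then show ?thesis using True by (simp add: ptensor_def)
  next
    case False
    then have "1 \<le> t' (i - k)" using Sym_pos[OF t', of "i - k"] by simp
    then show ?thesis using False by (simp add: ptensor_def)
  qed
qed

lemma ptensor_id: "ptensor k id id = id"
  by (auto simp: ptensor_def fun_eq_iff)

lemma ptensor_inv:
  assumes s: "s \<in> Sym k" and t: "t \<in> Sym l"
  shows "inv (ptensor k s t) = ptensor k (inv s) (inv t)"
proof (rule inv_unique_comp)
  have is1: "s \<circ> inv s = id" "inv s \<circ> s = id" using s unfolding Sym_def by (simp_all add: permutes_inv_o)
  have it1: "t \<circ> inv t = id" "inv t \<circ> t = id" using t unfolding Sym_def by (simp_all add: permutes_inv_o)
  show "ptensor k s t \<circ> ptensor k (inv s) (inv t) = id"
    using ptensor_comp[OF s t Sym_inv[OF s] Sym_inv[OF t]] is1 it1 ptensor_id by simp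
  show "ptensor k (inv s) (inv t) \<circ> ptensor k s t = id"
    using ptensor_comp[OF Sym_inv[OF s] Sym_inv[OF t] s t] is1 it1 ptensor_id by simp
qed


lemma block:
  assumes g: "inj_on g {1..m}" and p: "p \<in> Sym m"
  shows "(\<forall>i j. 1 \<le> i \<and> i < j \<and> j \<le> m \<longrightarrow> g (inv p i) < g (inv p j)) \<longleftrightarrow> rank g m = p"
proof
  assume a: "\<forall>i j. 1 \<le> i \<and> i < j \<and> j \<le> m \<longrightarrow> g (inv p i) < g (inv p j)"
  have ip: "inv p \<in> Sym m" using p by (rule Sym_inv)
  have q: "rank g m \<circ> inv p \<in> Sym m" by (rule Sym_comp[OF rank_Sym[OF g] ip])
  have "rank g m \<circ> inv p = id"
  proof (rule incr_id[OF q])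
    fix i j assume ij: "1 \<le> i" "i < j" "j \<le> m"
    have r: "1 \<le> inv p i" "inv p i \<le> m" "1 \<le> inv p j" "inv p j \<le> m"
      using Sym_range[OF ip, of i] Sym_range[OF ip, of j] ij by auto
    show "(rank g m \<circ> inv p) i < (rank g m \<circ> inv p) j"
      using rank_less[OF g r] a ij by auto
  qed
  then have "rank g m \<circ> inv p \<circ> p = p" by simp
  moreover have "inv p \<circ> p = id" using p unfolding Sym_def by (simp add: permutes_inv_o)
  ultimately show "rank g m = p" by (simp add: o_assoc[symmetric])
next
  assume r: "rank g m = p"
  have ip: "inv p \<in> Sym m" using p by (rule Sym_inv)
  show "\<forall>i j. 1 \<le> i \<and> i < j \<and> j \<le> m \<longrightarrow> g (inv p i) < g (inv p j)"
  proof (intro allI impI)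
    fix i j assume ij: "1 \<le> i \<and> i < j \<and> j \<le> m"
    have rr: "1 \<le> inv p i" "inv p i \<le> m" "1 \<le> inv p j" "inv p j \<le> m"
      using Sym_range[OF ip, of i] Sym_range[OF ip, of j] ij by auto
    have "rank g m (inv p i) < rank g m (inv p j)" using r ij Sym_invs(1)[OF p] by simp
    then show "g (inv p i) < g (inv p j)" using rank_less[OF g rr] by simp
  qed
qed

lemma shuffle_iff:
  assumes s: "s \<in> Sym k" and t: "t \<in> Sym l" and y: "y \<in> Sym (k + l)"
  shows "ptensor k s t \<circ> inv y \<in> Sh k l \<longleftrightarrow> rank y k = s \<and> rank (\<lambda>i. y (k + i)) l = t"
proof -
  let ?P = "ptensor k s t"
  have P: "?P \<in> Sym (k + l)" by (rule ptensor_Sym[OF s t])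
  have iy: "inv y \<in> Sym (k + l)" using y by (rule Sym_inv)
  have z: "?P \<circ> inv y \<in> Sym (k + l)" by (rule Sym_comp[OF P iy])
  have iz: "inv (?P \<circ> inv y) = y \<circ> ptensor k (inv s) (inv t)"
    using o_inv_distrib[OF Sym_bij[OF P] Sym_bij[OF iy]] Sym_inv_inv[OF y] ptensor_inv[OF s t] by simp
  have yinj: "\<And>a b. y a = y b \<Longrightarrow> a = b" using Sym_inj[OF y] by blast
  have i1: "inj_on y {1..k}" by (meson inj_onI yinj)
  have i2: "inj_on (\<lambda>i. y (k + i)) {1..l}" by (rule inj_onI) (use yinj in force)
  have C1: "(\<forall>i j. 1 \<le> i \<and> i < j \<and> j \<le> k \<longrightarrow> inv (?P \<circ> inv y) i < inv (?P \<circ> inv y) j) \<longleftrightarrow>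
       (\<forall>i j. 1 \<le> i \<and> i < j \<and> j \<le> k \<longrightarrow> y (inv s i) < y (inv s j))"
    unfolding iz by (auto simp: ptensor_def)
  have C2: "(\<forall>i j. k + 1 \<le> i \<and> i < j \<and> j \<le> k + l \<longrightarrow> inv (?P \<circ> inv y) i < inv (?P \<circ> inv y) j) \<longleftrightarrow>
       (\<forall>i j. 1 \<le> i \<and> i < j \<and> j \<le> l \<longrightarrow> y (k + inv t i) < y (k + inv t j))"
  proof
    assume a: "\<forall>i j. k + 1 \<le> i \<and> i < j \<and> j \<le> k + l \<longrightarrow> inv (?P \<circ> inv y) i < inv (?P \<circ> inv y) j"
    show "\<forall>i j. 1 \<le> i \<and> i < j \<and> j \<le> l \<longrightarrow> y (k + inv t i) < y (k + inv t j)"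
    proof (intro allI impI)
      fix i j assume ij: "1 \<le> i \<and> i < j \<and> j \<le> l"
      then have "inv (?P \<circ> inv y) (k + i) < inv (?P \<circ> inv y) (k + j)" using a by auto
      then show "y (k + inv t i) < y (k + inv t j)" using ij unfolding iz by (simp add: ptensor_def)
    qed
  next
    assume a: "\<forall>i j. 1 \<le> i \<and> i < j \<and> j \<le> l \<longrightarrow> y (k + inv t i) < y (k + inv t j)"
    show "\<forall>i j. k + 1 \<le> i \<and> i < j \<and> j \<le> k + l \<longrightarrow> inv (?P \<circ> inv y) i < inv (?P \<circ> inv y) j"
    proof (intro allI impI)
      fix i j assume ij: "k + 1 \<le> i \<and> i < j \<and> j \<le> k + l"
      then have "1 \<le> i - k \<and> i - k < j - k \<and> j - k \<le> l" by auto
      then have "y (k + inv t (i - k)) < y (k + inv t (j - k))" using a by blast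
      then show "inv (?P \<circ> inv y) i < inv (?P \<circ> inv y) j" using ij unfolding iz by (simp add: ptensor_def)
    qed
  qed
  have "?P \<circ> inv y \<in> Sh k l \<longleftrightarrow>
      (\<forall>i j. 1 \<le> i \<and> i < j \<and> j \<le> k \<longrightarrow> y (inv s i) < y (inv s j)) \<and>
      (\<forall>i j. 1 \<le> i \<and> i < j \<and> j \<le> l \<longrightarrow> y (k + inv t i) < y (k + inv t j))"
    unfolding Sh_def using z C1 C2 by simp
  also have "\<dots> \<longleftrightarrow> rank y k = s \<and> rank (\<lambda>i. y (k + i)) l = t"
    using block[OF i1 s] block[OF i2 t] by simp
  finally show ?thesis .
qed




lemma phi_Theta:
  assumes x: "x \<in> H_ho" and w: "w \<in> Sym n"
  shows "phi n (Poly_Mapping.lookup x) w = Poly_Mapping.lookup (Theta x) (n, inv w)"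
  using Theta_ho[OF x, of n "inv w"] Sym_inv[OF w] Sym_inv_inv[OF w] by simp

lemma Tsig_phi:
  assumes v: "v \<in> Sym n" and w: "w \<in> Sym n"
  shows "phi n (Poly_Mapping.lookup (Tsig n v :: oforest \<Rightarrow>\<^sub>0 'k::field)) w = (if w = v then 1 else 0)"
proof -
  have T: "(Tsig n v :: oforest \<Rightarrow>\<^sub>0 'k) \<in> H_ho" "Theta (Tsig n v :: oforest \<Rightarrow>\<^sub>0 'k) = Poly_Mapping.single (n, inv v) 1"
    using Tsig_spec[OF v] by blast+
  have "inv v = inv w \<longleftrightarrow> w = v"
  proof
    assume "inv v = inv w"
    then have "inv (inv v) = inv (inv w)" by simp
    then show "w = v" using Sym_inv_inv[OF v] Sym_inv_inv[OF w] by simp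
  qed simp
  then show ?thesis unfolding phi_Theta[OF T(1) w] T(2) lookup_single_if by simp
qed

lemma Tsig_keys:
  assumes v: "v \<in> Sym n"
  shows "Poly_Mapping.keys (Tsig n v :: oforest \<Rightarrow>\<^sub>0 'k::field) \<subseteq> HO n"
proof
  fix F assume F: "F \<in> Poly_Mapping.keys (Tsig n v :: oforest \<Rightarrow>\<^sub>0 'k)"
  have T: "(Tsig n v :: oforest \<Rightarrow>\<^sub>0 'k) \<in> H_ho" "Theta (Tsig n v :: oforest \<Rightarrow>\<^sub>0 'k) = Poly_Mapping.single (n, inv v) 1"
    using Tsig_spec[OF v] by blast+
  have Fm: "F \<in> HO (fst F)" using H_ho_keys[OF T(1) F] .
  show "F \<in> HO n"
  proof (rule ccontr)
    assume "F \<notin> HO n"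
    then have ne: "fst F \<noteq> n" using Fm by auto
    have "\<forall>w\<in>Sym (fst F). phi (fst F) (Poly_Mapping.lookup (Tsig n v :: oforest \<Rightarrow>\<^sub>0 'k)) w = 0"
      using ne by (simp add: phi_Theta[OF T(1)] T(2) lookup_single_if)
    from Inj[OF this] Fm have "Poly_Mapping.lookup (Tsig n v :: oforest \<Rightarrow>\<^sub>0 'k) F = 0" by blast
    then show False using F by (simp add: in_keys_iff)
  qed
qed

lemma phi_inj:
  assumes x: "x \<in> H_ho" and y: "y \<in> H_ho"
    and e: "\<And>n w. w \<in> Sym n \<Longrightarrow> phi n (Poly_Mapping.lookup x) w = phi n (Poly_Mapping.lookup y) w"
  shows "x = y"
proof (rule poly_mapping_eqI)
  fix F
  show "Poly_Mapping.lookup x F = Poly_Mapping.lookup y F"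
  proof (cases "F \<in> HO (fst F)")
    case True
    let ?m = "fst F"
    have "\<forall>w\<in>Sym ?m. phi ?m (\<lambda>G. Poly_Mapping.lookup x G - Poly_Mapping.lookup y G) w = 0"
    proof
      fix w assume "w \<in> Sym ?m"
      then have "phi ?m (Poly_Mapping.lookup x) w = phi ?m (Poly_Mapping.lookup y) w" by (rule e)
      then show "phi ?m (\<lambda>G. Poly_Mapping.lookup x G - Poly_Mapping.lookup y G) w = 0"
        unfolding phi_diff by simp
    qed
    from Inj[OF this] True show ?thesis by simp
  next
    case False
    then have "F \<notin> Poly_Mapping.keys x" "F \<notin> Poly_Mapping.keys y" using H_ho_keys x y by blast+
    then show ?thesis by (simp add: in_keys_iff)
  qed
qed

lemma phi_other:
  assumes "Poly_Mapping.keys x \<subseteq> HO m" and "n \<noteq> m"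
  shows "phi n (Poly_Mapping.lookup x) w = 0"
  unfolding phi_def
proof (rule sum.neutral, intro ballI)
  fix F assume "F \<in> HO n"
  then have "fst F = n" by (rule HO_fst)
  then have "F \<notin> HO m" using assms(2) HO_fst by blast
  then have "Poly_Mapping.lookup x F = 0" using assms(1) by (auto simp: in_keys_iff)
  then show "(if w \<in> W F then Poly_Mapping.lookup x F else 0) = 0" by simp
qed

lemma phi_sum:
  assumes "finite I"
  shows "phi n (Poly_Mapping.lookup (\<Sum>z\<in>I. f z)) w = (\<Sum>z\<in>I. phi n (Poly_Mapping.lookup (f z)) w)"
proof -
  have "phi n (Poly_Mapping.lookup (\<Sum>z\<in>I. f z)) w = (\<Sum>F\<in>HO n. \<Sum>z\<in>I. if w \<in> W F then Poly_Mapping.lookup (f z) F else 0)"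
    unfolding phi_def lookup_sum
  proof (rule sum.cong[OF refl])
    fix F show "(if w \<in> W F then \<Sum>z\<in>I. Poly_Mapping.lookup (f z) F else 0) = (\<Sum>z\<in>I. if w \<in> W F then Poly_Mapping.lookup (f z) F else 0)"
      by (cases "w \<in> W F") simp_all
  qed
  also have "\<dots> = (\<Sum>z\<in>I. phi n (Poly_Mapping.lookup (f z)) w)"
    unfolding phi_def by (rule sum.swap)
  finally show ?thesis .
qed

lemma H_ho_sum:
  assumes "\<And>z. z \<in> I \<Longrightarrow> f z \<in> H_ho"
  shows "(\<Sum>z\<in>I. f z) \<in> H_ho"
proof (rule H_ho_I)
  fix F assume "F \<in> Poly_Mapping.keys (\<Sum>z\<in>I. f z)"
  then have "F \<in> (\<Union>z\<in>I. Poly_Mapping.keys (f z))" using keys_sum[of f I] by (rule subsetD[rotated])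
  then obtain z where z: "z \<in> I" "F \<in> Poly_Mapping.keys (f z)" by (rule UN_E)
  have "f z \<in> H_ho" using z(1) by (rule assms)
  then show "heap_ordered F" using z(2) unfolding H_ho_def by simp
qed

lemma Sh_Sym: "Sh k l \<subseteq> Sym (k + l)"
proof
  fix z assume "z \<in> Sh k l"
  then show "z \<in> Sym (k + l)" unfolding Sh_def mem_Collect_eq by (rule conjunct1)
qed

lemma finite_Sh: "finite (Sh k l)" by (rule finite_subset[OF Sh_Sym finite_Sym])


lemma Sh_D:
  assumes "e \<in> Sh k l"
  shows "e \<in> Sym (k + l)"
    and "\<And>i j. 1 \<le> i \<Longrightarrow> i < j \<Longrightarrow> j \<le> k \<Longrightarrow> inv e i < inv e j"
    and "\<And>i j. k + 1 \<le> i \<Longrightarrow> i < j \<Longrightarrow> j \<le> k + l \<Longrightarrow> inv e i < inv e j"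
  using assms unfolding Sh_def mem_Collect_eq by blast+

lemma fact_fmul_HO:
  assumes F: "F \<in> HO k" and G: "G \<in> HO l" and e: "e \<in> Sh k l"
  shows "fact (inv e) (fmul F G) \<in> HO (k + l)"
proof (rule HO_I)
  have eS: "e \<in> Sym (k + l)" by (rule Sh_D(1)[OF e])
  have ie: "inv e \<in> Sym (k + l)" using eS by (rule Sym_inv)
  show "fst (fact (inv e) (fmul F G)) = k + l"
    using HO_fst[OF F] HO_fst[OF G] by (simp add: fact_def fmul_def)
  fix i j assume h: "snd (fact (inv e) (fmul F G)) i = Some j"
  then have "map_option (inv e) (snd (fmul F G) (e i)) = Some j"
    using Sym_inv_inv[OF eS] by (simp add: fact_def)
  then obtain j' where j': "snd (fmul F G) (e i) = Some j'" "j = inv e j'" by blast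
  have ii: "inv e (e i) = i" by (rule Sym_invs(2)[OF eS])
  have E: "(1 \<le> j' \<and> j' < e i \<and> e i \<le> k) \<or> (k < j' \<and> j' < e i \<and> e i \<le> k + l)"
    by (rule fmul_edge[OF F G j'(1)])
  have "j < i"
  proof (cases "1 \<le> j' \<and> j' < e i \<and> e i \<le> k")
    case True
    then have "inv e j' < inv e (e i)" using Sh_D(2)[OF e] by blast
    then show ?thesis using j'(2) ii by simp
  next
    case False
    then have "k + 1 \<le> j'" "j' < e i" "e i \<le> k + l" using E by auto
    then have "inv e j' < inv e (e i)" using Sh_D(3)[OF e] by blast
    then show ?thesis using j'(2) ii by simp
  qed
  moreover have "1 \<le> j"
  proof -
    have "1 \<le> j'" using E by auto
    then show ?thesis using Sym_pos[OF ie, of j'] j'(2) by simp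
  qed
  moreover have "i \<le> k + l"
  proof -
    have "1 \<le> e i" "e i \<le> k + l" using E by auto
    then have "inv e (e i) \<le> k + l" using Sym_range[OF ie, of "e i"] by simp
    then show ?thesis using ii by simp
  qed
  ultimately show "1 \<le> j \<and> j < i \<and> i \<le> k + l" by simp
qed

lemma sigma_eq:
  assumes z: "z \<in> Sym n" and P: "P \<in> Sym n" and e: "e \<in> Sym n" and w: "w \<in> Sym n"
  shows "w = inv z \<circ> P \<circ> e \<longleftrightarrow> z = P \<circ> inv (w \<circ> inv e)"
proof -
  have iwe: "inv (w \<circ> inv e) = e \<circ> inv w"
    using o_inv_distrib[OF Sym_bij[OF w] Sym_bij[OF Sym_inv[OF e]]] Sym_inv_inv[OF e] by simp
  have "w = inv z \<circ> P \<circ> e \<longleftrightarrow> z = P \<circ> e \<circ> inv w"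
  proof
    assume a: "w = inv z \<circ> P \<circ> e"
    show "z = P \<circ> e \<circ> inv w"
    proof
      fix x
      have "z x = z (w (inv w x))" using Sym_invs(1)[OF w] by simp
      also have "\<dots> = z (inv z (P (e (inv w x))))" using a by simp
      also have "\<dots> = P (e (inv w x))" using Sym_invs(1)[OF z] by simp
      finally show "z x = (P \<circ> e \<circ> inv w) x" by simp
    qed
  next
    assume a: "z = P \<circ> e \<circ> inv w"
    show "w = inv z \<circ> P \<circ> e"
    proof
      fix x
      have "w x = inv z (z (w x))" using Sym_invs(2)[OF z] by simp
      also have "\<dots> = inv z (P (e (inv w (w x))))" using a by simp
      also have "\<dots> = inv z (P (e x))" using Sym_invs(2)[OF w] by simp
      finally show "w x = (inv z \<circ> P \<circ> e) x" by simp
    qed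
  qed
  then show ?thesis unfolding iwe by (simp add: o_assoc)
qed


theorem mainTheorem10:
  fixes k l :: nat and s t e :: "nat \<Rightarrow> nat"
  assumes "s \<in> Sym k" and "t \<in> Sym l" and "e \<in> Sh k l"
  shows "vact (inv e) (vmul (Tsig k s) (Tsig l t) :: oforest \<Rightarrow>\<^sub>0 'k::field) \<in> H_ho
       \<and> vact (inv e) (vmul (Tsig k s) (Tsig l t) :: oforest \<Rightarrow>\<^sub>0 'k::field)
           = (\<Sum>z\<in>Sh k l. Tsig (k + l) (inv z \<circ> ptensor k s t \<circ> e))"
proof -
  note sS = assms(1) and tS = assms(2) and eSh = assms(3)
  have eS: "e \<in> Sym (k + l)" by (rule Sh_D(1)[OF eSh])
  have ie: "inv e \<in> Sym (k + l)" using eS by (rule Sym_inv)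
  define A where "A = (Tsig k s :: oforest \<Rightarrow>\<^sub>0 'k)"
  define B where "B = (Tsig l t :: oforest \<Rightarrow>\<^sub>0 'k)"
  have kA: "Poly_Mapping.keys A \<subseteq> HO k" unfolding A_def by (rule Tsig_keys[OF sS])
  have kB: "Poly_Mapping.keys B \<subseteq> HO l" unfolding B_def by (rule Tsig_keys[OF tS])
  define L where "L = vact (inv e) (vmul A B)"
  have lL: "Poly_Mapping.lookup L H = (\<Sum>F\<in>HO k. \<Sum>G\<in>HO l. if fmul F G = fact e H then Poly_Mapping.lookup A F * Poly_Mapping.lookup B G else 0)" for H
    unfolding L_def lookup_vact[OF eS] lookup_vmul[OF kA kB] ..
  have feq: "fmul F G = fact e H \<longleftrightarrow> H = fact (inv e) (fmul F G)" for F G H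
  proof
    assume "fmul F G = fact e H" then show "H = fact (inv e) (fmul F G)" using fact_fact(2)[OF eS, of H] by simp
  next
    assume "H = fact (inv e) (fmul F G)" then show "fmul F G = fact e H" using fact_fact(1)[OF eS, of "fmul F G"] by simp
  qed
  have keysL: "Poly_Mapping.keys L \<subseteq> HO (k + l)"
  proof
    fix H assume "H \<in> Poly_Mapping.keys L"
    then have "Poly_Mapping.lookup L H \<noteq> 0" by (simp add: in_keys_iff)
    then have "(\<Sum>F\<in>HO k. \<Sum>G\<in>HO l. if fmul F G = fact e H then Poly_Mapping.lookup A F * Poly_Mapping.lookup B G else 0) \<noteq> 0"
      unfolding lL .
    then obtain F where F: "F \<in> HO k" and nz: "(\<Sum>G\<in>HO l. if fmul F G = fact e H then Poly_Mapping.lookup A F * Poly_Mapping.lookup B G else 0) \<noteq> 0"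
      by (rule sum.not_neutral_contains_not_neutral)
    from nz obtain G where G: "G \<in> HO l" and nz2: "(if fmul F G = fact e H then Poly_Mapping.lookup A F * Poly_Mapping.lookup B G else 0) \<noteq> 0"
      by (rule sum.not_neutral_contains_not_neutral)
    have "fmul F G = fact e H"
    proof (rule ccontr)
      assume "fmul F G \<noteq> fact e H"
      then show False using nz2 by simp
    qed
    then have "H = fact (inv e) (fmul F G)" using feq by blast
    then show "H \<in> HO (k + l)" using fact_fmul_HO[OF F G eSh] by simp
  qed
  have LH: "L \<in> H_ho"
  proof (rule H_ho_I)
    fix H assume "H \<in> Poly_Mapping.keys L"
    then have "H \<in> HO (k + l)" using keysL by blast
    moreover then have "fst H = k + l" by (rule HO_fst)
    ultimately show "heap_ordered H" using ho_char by simp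
  qed
  define \<sigma> :: "(nat \<Rightarrow> nat) \<Rightarrow> nat \<Rightarrow> nat" where "\<sigma> z = inv z \<circ> ptensor k s t \<circ> e" for z
  have PS: "ptensor k s t \<in> Sym (k + l)" by (rule ptensor_Sym[OF sS tS])
  have \<sigma>S: "\<sigma> z \<in> Sym (k + l)" if "z \<in> Sh k l" for z
  proof -
    have "z \<in> Sym (k + l)" using Sh_D(1)[OF that] .
    then have "inv z \<in> Sym (k + l)" by (rule Sym_inv)
    then show ?thesis unfolding \<sigma>_def by (intro Sym_comp PS eS)
  qed
  define R where "R = (\<Sum>z\<in>Sh k l. (Tsig (k + l) (\<sigma> z) :: oforest \<Rightarrow>\<^sub>0 'k))"
  have RH: "R \<in> H_ho" unfolding R_def
    by (rule H_ho_sum) (use Tsig_spec[OF \<sigma>S] in blast)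
  have "L = R"
  proof (rule phi_inj[OF LH RH])
    fix n w assume w: "w \<in> Sym n"
    show "phi n (Poly_Mapping.lookup L) w = phi n (Poly_Mapping.lookup R) w"
    proof (cases "n = k + l")
      case False
      have "phi n (Poly_Mapping.lookup R) w = (\<Sum>z\<in>Sh k l. phi n (Poly_Mapping.lookup (Tsig (k + l) (\<sigma> z) :: oforest \<Rightarrow>\<^sub>0 'k)) w)"
        unfolding R_def by (rule phi_sum[OF finite_Sh])
      also have "\<dots> = 0"
        by (rule sum.neutral) (use phi_other[OF Tsig_keys[OF \<sigma>S] False] in blast)
      finally show ?thesis using phi_other[OF keysL False] by simp
    next
      case True
      have wS: "w \<in> Sym (k + l)" using w True by simp
      define y where "y = w \<circ> inv e"
      have yS: "y \<in> Sym (k + l)" unfolding y_def by (rule Sym_comp[OF wS ie])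
      define r1 where "r1 = rank y k"
      define r2 where "r2 = rank (\<lambda>i. y (k + i)) l"
      have yinj: "\<And>a b. y a = y b \<Longrightarrow> a = b" using Sym_inj[OF yS] by blast
      have i1: "inj_on y {1..k}" by (meson inj_onI yinj)
      have i2: "inj_on (\<lambda>i. y (k + i)) {1..l}" by (rule inj_onI) (use yinj in force)
      have r1S: "r1 \<in> Sym k" unfolding r1_def by (rule rank_Sym[OF i1])
      have r2S: "r2 \<in> Sym l" unfolding r2_def by (rule rank_Sym[OF i2])
      let ?a = "Poly_Mapping.lookup A" and ?b = "Poly_Mapping.lookup B"
      have "phi n (Poly_Mapping.lookup L) w = (\<Sum>H\<in>HO (k + l). \<Sum>F\<in>HO k. \<Sum>G\<in>HO l.
          if H = fact (inv e) (fmul F G) then (if w \<in> W H then ?a F * ?b G else 0) else 0)"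
        unfolding phi_def True lL
      proof (rule sum.cong[OF refl])
        fix H
        show "(if w \<in> W H then \<Sum>F\<in>HO k. \<Sum>G\<in>HO l. if fmul F G = fact e H then ?a F * ?b G else 0 else 0) =
          (\<Sum>F\<in>HO k. \<Sum>G\<in>HO l. if H = fact (inv e) (fmul F G) then (if w \<in> W H then ?a F * ?b G else 0) else 0)"
        proof (cases "w \<in> W H")
          case True
          show ?thesis unfolding if_P[OF True]
            by (intro sum.cong[OF refl]) (simp add: feq True)
        next
          case False
          have "(\<Sum>F\<in>HO k. \<Sum>G\<in>HO l. if H = fact (inv e) (fmul F G) then (if w \<in> W H then ?a F * ?b G else 0) else 0) = 0"
            using False by (intro sum.neutral ballI) auto
          then show ?thesis using False by simp
        qed
      qed
      also have "\<dots> = (\<Sum>F\<in>HO k. \<Sum>H\<in>HO (k + l). \<Sum>G\<in>HO l.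
          if H = fact (inv e) (fmul F G) then (if w \<in> W H then ?a F * ?b G else 0) else 0)"
        by (rule sum.swap)
      also have "\<dots> = (\<Sum>F\<in>HO k. \<Sum>G\<in>HO l. \<Sum>H\<in>HO (k + l).
          if H = fact (inv e) (fmul F G) then (if w \<in> W H then ?a F * ?b G else 0) else 0)"
        by (rule sum.cong[OF refl], rule sum.swap)
      also have "\<dots> = (\<Sum>F\<in>HO k. \<Sum>G\<in>HO l. if w \<in> W (fact (inv e) (fmul F G)) then ?a F * ?b G else 0)"
      proof (intro sum.cong[OF refl])
        fix F G assume F: "F \<in> HO k" and G: "G \<in> HO l"
        show "(\<Sum>H\<in>HO (k + l). if H = fact (inv e) (fmul F G) then (if w \<in> W H then ?a F * ?b G else 0) else 0) =
          (if w \<in> W (fact (inv e) (fmul F G)) then ?a F * ?b G else 0)"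
          using fact_fmul_HO[OF F G eSh] by (simp add: sum.delta[OF finite_HO])
      qed
      also have "\<dots> = (\<Sum>F\<in>HO k. \<Sum>G\<in>HO l. (if r1 \<in> W F then ?a F else 0) * (if r2 \<in> W G then ?b G else 0))"
      proof (intro sum.cong[OF refl])
        fix F G assume F: "F \<in> HO k" and G: "G \<in> HO l"
        have fst: "fst (fmul F G) = k + l" using HO_fst[OF F] HO_fst[OF G] by (simp add: fmul_def)
        have "w \<in> W (fact (inv e) (fmul F G)) \<longleftrightarrow> r1 \<in> W F \<and> r2 \<in> W G"
          unfolding W_fact[OF ie wS fst] y_def[symmetric] W_fmul[OF F G yS] r1_def r2_def ..
        then show "(if w \<in> W (fact (inv e) (fmul F G)) then ?a F * ?b G else 0) =
          (if r1 \<in> W F then ?a F else 0) * (if r2 \<in> W G then ?b G else 0)" by simp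
      qed
      also have "\<dots> = phi k ?a r1 * phi l ?b r2"
        unfolding phi_def sum_product ..
      also have "\<dots> = (if r1 = s \<and> r2 = t then 1 else 0)"
        unfolding A_def B_def Tsig_phi[OF sS r1S] Tsig_phi[OF tS r2S] by simp
      finally have lhs: "phi n (Poly_Mapping.lookup L) w = (if r1 = s \<and> r2 = t then 1 else 0)" .
      define z0 where "z0 = ptensor k s t \<circ> inv y"
      have "phi n (Poly_Mapping.lookup R) w = (\<Sum>z\<in>Sh k l. phi n (Poly_Mapping.lookup (Tsig (k + l) (\<sigma> z) :: oforest \<Rightarrow>\<^sub>0 'k)) w)"
        unfolding R_def by (rule phi_sum[OF finite_Sh])
      also have "\<dots> = (\<Sum>z\<in>Sh k l. if z = z0 then 1 else 0)"
      proof (rule sum.cong[OF refl])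
        fix z assume z: "z \<in> Sh k l"
        have "w = \<sigma> z \<longleftrightarrow> z = z0"
          unfolding \<sigma>_def z0_def y_def by (rule sigma_eq[OF Sh_D(1)[OF z] PS eS wS])
        then show "phi n (Poly_Mapping.lookup (Tsig (k + l) (\<sigma> z) :: oforest \<Rightarrow>\<^sub>0 'k)) w = (if z = z0 then 1 else 0)"
          unfolding True Tsig_phi[OF \<sigma>S[OF z] wS] by simp
      qed
      also have "\<dots> = (if z0 \<in> Sh k l then 1 else 0)"
        by (simp add: sum.delta[OF finite_Sh])
      also have "\<dots> = (if r1 = s \<and> r2 = t then 1 else 0)"
        unfolding z0_def r1_def r2_def shuffle_iff[OF sS tS yS] ..
      finally show ?thesis using lhs by simp
    qed
  qed
  then show ?thesis using LH unfolding L_def R_def \<sigma>_def A_def B_def by simp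
qed

end
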